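(* Assume $q\ge n$, and let $k,r$ be divisors of $n$. Let $m$ be an $\mathbb{F}_{q^k}$-subline of $\mathrm{PG}(2,q^n)$ external to $l_\infty$ such that the smallest subline containing $m$ and tangent to $l_\infty$ is an $\mathbb{F}_{q^r}$-subline. Then $M=\phi(m)$ is a set of $q^k+1$ affine points of $\Sigma$, no three collinear, contained in an $r$-dimensional subspace of $\Sigma$ meeting $H_\infty$ in an element of $\mathcal D_r$, and any three points of $M$ lie on a normal rational curve of $\Sigma$ all of whose points belong to $M$.
   Context: Let $q$ be a prime power and $n\ge1$. Points of $\mathrm{PG}(2,q^n)$ are written $(a,b,c)_{\mathbb{F}_{q^n}}$; $l_\infty$ is the line $c=0$. For $j\mid n$, an $\mathbb{F}_{q^j}$-subline is a set $\{(su+tv)_{\mathbb{F}_{q^n}}:(s,t)\in\mathbb{F}_{q^j}^2\setminus\{(0,0)\}\}$ for $\mathbb{F}_{q^n}$-independent $u,v\in\mathbb{F}_{q^n}^3$; external to $l_\infty$ means no point on $l_\infty$, tangent means exactly one; "smallest" means over the smallest subfield. Let $\Sigma=\mathrm{PG}(2n,q)$ be the projective space of the $\mathbb{F}_q$-vector space $\mathbb{F}_{q^n}\times\mathbb{F}_{q^n}\times\mathbb{F}_q$, points $(a,b,c)_{\mathbb{F}_q}$; $H_\infty$ is the hyperplane $c=0$, points off it are affine. For $k\mid n$, $\mathcal D_k=\{\{(ax,bx,0)_{\mathbb{F}_q}:x\in\mathbb{F}_{q^k}^*\}:(a,b)\in\mathbb{F}_{q^n}^2\setminus\{(0,0)\}\}$.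 The ABB-map $\phi$ sends an affine point $(a,b,1)_{\mathbb{F}_{q^n}}$ to $(a,b,1)_{\mathbb{F}_q}$. A normal rational curve of degree $d$ ($1\le d\le q$) is a set $\{(\sum_{i=0}^d s^{d-i}t^ie_i)_{\mathbb{F}_q}:(s,t)\in\mathbb{F}_q^2\setminus\{(0,0)\}\}$ for linearly independent $e_0,\dots,e_d$. *)

theory Defs
  imports Main "HOL-Computational_Algebra.Primes"
begin

text \<open>Vectors are triples over the field 'a of order q^n.
  The subfield F_{q^j} is the set of fixed points of x |-> x^(q^j).\<close>

type_synonym 'a vec3 = "'a \<times> 'a \<times> 'a"

definition subf :: "nat \<Rightarrow> nat \<Rightarrow> 'a::field set" where
  "subf q j = {x. x ^ (q ^ j) = x}"

definition vsmul :: "'a::field \<Rightarrow> 'a vec3 \<Rightarrow> 'a vec3" where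
  "vsmul c w = (c * fst w, c * fst (snd w), c * snd (snd w))"

definition vadd :: "'a::field vec3 \<Rightarrow> 'a vec3 \<Rightarrow> 'a vec3" where
  "vadd u v = (fst u + fst v, fst (snd u) + fst (snd v), snd (snd u) + snd (snd v))"

text \<open>Points of PG(2,q^n): (w)_{F_{q^n}} for nonzero w.\<close>
definition ptN :: "'a::field vec3 \<Rightarrow> 'a vec3 set" where
  "ptN w = {vsmul c w | c. c \<noteq> 0}"

text \<open>Points of Sigma = PG(2n,q): (w)_{F_q}, for nonzero w with third coordinate in F_q.\<close>
definition ptS :: "nat \<Rightarrow> 'a::field vec3 \<Rightarrow> 'a vec3 set" where
  "ptS q w = {vsmul c w | c. c \<in> subf q 1 \<and> c \<noteq> 0}"

definition inV :: "nat \<Rightarrow> 'a::field vec3 \<Rightarrow> bool" where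
  "inV q w \<longleftrightarrow> snd (snd w) \<in> subf q 1"

definition Sigma_points :: "nat \<Rightarrow> 'a::field vec3 set set" where
  "Sigma_points q = {ptS q w | w. inV q w \<and> w \<noteq> (0, 0, 0)}"

definition affine_Sigma_point :: "nat \<Rightarrow> 'a::field vec3 set \<Rightarrow> bool" where
  "affine_Sigma_point q P \<longleftrightarrow> (\<exists>w. inV q w \<and> snd (snd w) \<noteq> 0 \<and> P = ptS q w)"

definition indepN :: "'a::field vec3 \<Rightarrow> 'a vec3 \<Rightarrow> bool" where
  "indepN u v \<longleftrightarrow> (\<forall>a b. vadd (vsmul a u) (vsmul b v) = (0, 0, 0) \<longrightarrow> a = 0 \<and> b = 0)"

definition subline :: "nat \<Rightarrow> nat \<Rightarrow> 'a::field vec3 \<Rightarrow> 'a vec3 \<Rightarrow> 'a vec3 set set" where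
  "subline q j u v = {ptN (vadd (vsmul s u) (vsmul t v)) | s t.
      s \<in> subf q j \<and> t \<in> subf q j \<and> (s, t) \<noteq> (0, 0)}"

definition is_subline :: "nat \<Rightarrow> nat \<Rightarrow> 'a::field vec3 set set \<Rightarrow> bool" where
  "is_subline q j m \<longleftrightarrow> (\<exists>u v. indepN u v \<and> m = subline q j u v)"

definition on_linf :: "'a::field vec3 set \<Rightarrow> bool" where
  "on_linf P \<longleftrightarrow> (\<exists>a b. (a, b) \<noteq> (0, 0) \<and> P = ptN (a, b, 0))"

definition external_linf :: "'a::field vec3 set set \<Rightarrow> bool" where
  "external_linf m \<longleftrightarrow> (\<forall>P\<in>m. \<not> on_linf P)"

definition tangent_linf :: "'a::field vec3 set set \<Rightarrow> bool" where
  "tangent_linf m \<longleftrightarrow> (\<exists>!P. P \<in> m \<and> on_linf P)"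

text \<open>The ABB-map on affine points (a,b,1)_{F_{q^n}}.\<close>
definition phi :: "nat \<Rightarrow> 'a::field vec3 set \<Rightarrow> 'a vec3 set" where
  "phi q P = ptS q (THE w. \<exists>a b. w = (a, b, 1) \<and> P = ptN w)"

definition lincomb :: "'a::field list \<Rightarrow> 'a vec3 list \<Rightarrow> 'a vec3" where
  "lincomb cs ws = ((\<Sum>i<length ws. cs ! i * fst (ws ! i)),
                    (\<Sum>i<length ws. cs ! i * fst (snd (ws ! i))),
                    (\<Sum>i<length ws. cs ! i * snd (snd (ws ! i))))"

definition indepQ :: "nat \<Rightarrow> 'a::field vec3 list \<Rightarrow> bool" where
  "indepQ q ws \<longleftrightarrow> (\<forall>cs. length cs = length ws \<and> set cs \<subseteq> subf q 1 \<and> lincomb cs ws = (0, 0, 0)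
      \<longrightarrow> set cs \<subseteq> {0})"

definition spanQ :: "nat \<Rightarrow> 'a::field vec3 list \<Rightarrow> 'a vec3 set" where
  "spanQ q ws = {lincomb cs ws | cs. length cs = length ws \<and> set cs \<subseteq> subf q 1}"

definition proj_span :: "nat \<Rightarrow> 'a::field vec3 list \<Rightarrow> 'a vec3 set set" where
  "proj_span q ws = {ptS q w | w. w \<in> spanQ q ws \<and> w \<noteq> (0, 0, 0)}"

definition subspace_dim :: "nat \<Rightarrow> nat \<Rightarrow> 'a::field vec3 set set \<Rightarrow> bool" where
  "subspace_dim q d S \<longleftrightarrow> (\<exists>ws. length ws = d + 1 \<and> (\<forall>w\<in>set ws. inV q w) \<and> indepQ q ws
      \<and> S = proj_span q ws)"

definition H_inf_points :: "nat \<Rightarrow> 'a::field vec3 set set" where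
  "H_inf_points q = {P \<in> Sigma_points q. \<exists>a b. (a, b) \<noteq> (0, 0) \<and> P = ptS q (a, b, 0)}"

text \<open>Elements of the Desarguesian spread D_k, as point sets of Sigma.\<close>
definition D_elem :: "nat \<Rightarrow> nat \<Rightarrow> 'a::field vec3 set set \<Rightarrow> bool" where
  "D_elem q k X \<longleftrightarrow> (\<exists>a b. (a, b) \<noteq> (0, 0) \<and>
      X = {ptS q (a * x, b * x, 0) | x. x \<in> subf q k \<and> x \<noteq> 0})"

definition collinear3 :: "nat \<Rightarrow> 'a::field vec3 set \<Rightarrow> 'a vec3 set \<Rightarrow> 'a vec3 set \<Rightarrow> bool" where
  "collinear3 q P1 P2 P3 \<longleftrightarrow> (\<exists>u v. inV q u \<and> inV q v \<and> {P1, P2, P3} \<subseteq> proj_span q [u, v])"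

definition nrc :: "nat \<Rightarrow> nat \<Rightarrow> 'a::field vec3 list \<Rightarrow> 'a vec3 set set" where
  "nrc q d es = {ptS q (lincomb (map (\<lambda>i. s ^ (d - i) * t ^ i) [0..<d+1]) es) | s t.
      s \<in> subf q 1 \<and> t \<in> subf q 1 \<and> (s, t) \<noteq> (0, 0)}"

definition is_nrc :: "nat \<Rightarrow> 'a::field vec3 set set \<Rightarrow> bool" where
  "is_nrc q C \<longleftrightarrow> (\<exists>d es. 1 \<le> d \<and> d \<le> q \<and> length es = d + 1 \<and> (\<forall>e\<in>set es. inV q e)
      \<and> indepQ q es \<and> C = nrc q d es)"

end

theory Submission
  imports Defs "HOL-Computational_Algebra.Polynomial"
begin


locale ff =
  fixes q n p e :: nat and T :: "'a::{field,finite} itself"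
  assumes p_prime: "prime p" and e_pos: "e > 0" and q_def: "q = p ^ e"
    and n_pos: "n \<ge> 1" and card_F: "card (UNIV :: 'a set) = q ^ n"
begin

lemma q_ge2: "q \<ge> 2"
proof -
  have "p \<ge> 2" using p_prime prime_ge_2_nat by blast
  hence "p ^ e \<ge> p ^ 1" using e_pos by (intro power_increasing) auto
  thus ?thesis using \<open>p \<ge> 2\<close> q_def by simp
qed

lemma q_pos: "q > 0" using q_ge2 by simp

lemma char_p: "CHAR('a) = p"
proof -
  have fin: "finite (UNIV :: 'a set)" by simp
  have cp: "CHAR('a) > 0" using finite_imp_CHAR_pos[OF fin] .
  have pr: "prime CHAR('a)" using prime_CHAR_semidom[OF cp] .
  have "(\<Sum>y\<in>(UNIV::'a set). y + 1) = (\<Sum>y\<in>UNIV. y)"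
    by (rule sum.reindex_bij_witness[of _ "\<lambda>y. y - 1" "\<lambda>y. y + 1"]) auto
  hence "of_nat (card (UNIV::'a set)) = (0::'a)" by (simp add: sum.distrib)
  hence "CHAR('a) dvd card (UNIV::'a set)" using of_nat_eq_0_iff_char_dvd by blast
  hence "CHAR('a) dvd p ^ (e * n)" using card_F q_def
    by (simp add: power_mult)
  hence "CHAR('a) dvd p" using pr prime_dvd_power by blast
  thus ?thesis using pr p_prime by (simp add: primes_dvd_imp_eq)
qed

lemma prime_char: "prime CHAR('a)" using char_p p_prime by simp

lemma qj_eq: "q ^ j = CHAR('a) ^ (e * j)"
  using char_p q_def by (simp add: power_mult)

lemma frob_add: "((x::'a) + y) ^ (q ^ j) = x ^ (q ^ j) + y ^ (q ^ j)"
  by (rule freshmans_dream'[OF prime_char qj_eq])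

lemma frob_sum: "(sum (f :: 'b \<Rightarrow> 'a) A) ^ (q ^ j) = (\<Sum>i\<in>A. f i ^ (q ^ j))"
  by (rule freshmans_dream_sum'[OF prime_char qj_eq])

lemma frob_diff: "((x::'a) - y) ^ (q ^ j) = x ^ (q ^ j) - y ^ (q ^ j)"
proof -
  have "x ^ (q ^ j) = ((x - y) + y) ^ (q ^ j)" by simp
  also have "\<dots> = (x - y) ^ (q ^ j) + y ^ (q ^ j)" by (rule frob_add)
  finally show ?thesis by simp
qed

lemma frob_minus: "(- (x::'a)) ^ (q ^ j) = - (x ^ (q ^ j))"
  using frob_diff[of 0 x j] by (simp add: power_0_left q_pos)

lemma frob_mult: "((x::'a) * y) ^ (q ^ j) = x ^ (q ^ j) * y ^ (q ^ j)"
  by (simp add: power_mult_distrib)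

lemma frob_divide: "((x::'a) / y) ^ (q ^ j) = x ^ (q ^ j) / y ^ (q ^ j)"
  by (simp add: power_divide)

lemma frob_zero: "(0::'a) ^ (q ^ j) = 0" using q_pos by simp

lemma frob_inj: "(x::'a) ^ (q ^ j) = y ^ (q ^ j) \<Longrightarrow> x = y"
  using frob_diff[of x y j] by simp

lemma frob_comp: "((x::'a) ^ (q ^ a)) ^ (q ^ b) = x ^ (q ^ (a + b))"
  by (simp add: power_mult[symmetric] power_add mult.commute)

lemma pow_card: "(x::'a) ^ card (UNIV :: 'a set) = x"
proof (cases "x = 0")
  case False
  have "x * (\<Prod>y\<in>UNIV-{0}. x * y) = x * x ^ (card (UNIV :: 'a set) - 1) * \<Prod>(UNIV-{0})"
    by (simp add: prod.distrib mult_ac)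
  also have "x * x ^ (card (UNIV :: 'a set) - 1) = x ^ Suc (card (UNIV :: 'a set) - 1)"
    by (subst power_Suc) auto
  also have "Suc (card (UNIV :: 'a set) - 1) = card (UNIV :: 'a set)"
    using finite_UNIV_card_ge_0[where ?'a = 'a] by simp
  also have "(\<Prod>y\<in>UNIV-{0}. x * y) = (\<Prod>y\<in>UNIV-{0}. y)"
    by (rule prod.reindex_bij_witness[of _ "\<lambda>y. y / x" "\<lambda>y. x * y"]) (use False in auto)
  finally show ?thesis
    by simp
qed (use finite_UNIV_card_ge_0[where ?'a = 'a] in auto)

lemma frob_n: "(x::'a) ^ (q ^ n) = x" using pow_card card_F by simp

lemma frob_surj: "\<exists>y. (y::'a) ^ (q ^ j) = x"
proof -
  have "inj (\<lambda>y::'a. y ^ (q ^ j))" by (auto intro: injI frob_inj)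
  hence "surj (\<lambda>y::'a. y ^ (q ^ j))" using finite_UNIV_inj_surj[of "\<lambda>y::'a. y ^ (q ^ j)"] by simp
  thus ?thesis by (metis surjD)
qed

lemma subf_iff: "x \<in> subf q j \<longleftrightarrow> (x::'a) ^ (q ^ j) = x" by (simp add: subf_def)

lemma subf_0[simp]: "(0::'a) \<in> subf q j" by (simp add: subf_iff frob_zero)
lemma subf_1[simp]: "(1::'a) \<in> subf q j" by (simp add: subf_iff)
lemma subf_add: "x \<in> subf q j \<Longrightarrow> y \<in> subf q j \<Longrightarrow> (x::'a) + y \<in> subf q j"
  by (simp add: subf_iff frob_add)
lemma subf_diff: "x \<in> subf q j \<Longrightarrow> y \<in> subf q j \<Longrightarrow> (x::'a) - y \<in> subf q j"
  by (simp add: subf_iff frob_diff)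
lemma subf_minus: "x \<in> subf q j \<Longrightarrow> - (x::'a) \<in> subf q j"
  by (simp add: subf_iff frob_minus)
lemma subf_mult: "x \<in> subf q j \<Longrightarrow> y \<in> subf q j \<Longrightarrow> (x::'a) * y \<in> subf q j"
  by (simp add: subf_iff frob_mult)
lemma subf_divide: "x \<in> subf q j \<Longrightarrow> y \<in> subf q j \<Longrightarrow> (x::'a) / y \<in> subf q j"
  by (simp add: subf_iff frob_divide)
lemma subf_inverse: "x \<in> subf q j \<Longrightarrow> inverse (x::'a) \<in> subf q j"
  using subf_divide[of 1 j x] by (simp add: divide_inverse)
lemma subf_power: "x \<in> subf q j \<Longrightarrow> (x::'a) ^ i \<in> subf q j"
  unfolding subf_iff by (metis power_mult mult.commute)
lemma subf_sum: "(\<And>i. i \<in> A \<Longrightarrow> f i \<in> subf q j) \<Longrightarrow> (sum f A :: 'a) \<in> subf q j"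
  by (induction A rule: infinite_finite_induct) (auto intro: subf_add)
lemma subf_prod: "(\<And>i. i \<in> A \<Longrightarrow> f i \<in> subf q j) \<Longrightarrow> (prod f A :: 'a) \<in> subf q j"
  by (induction A rule: infinite_finite_induct) (auto intro: subf_mult)

lemma subf1_sub: "x \<in> subf q 1 \<Longrightarrow> (x::'a) \<in> subf q j"
proof (induction j)
  case 0 thus ?case by (simp add: subf_iff)
next
  case (Suc j)
  hence "x ^ (q ^ j) = x" "x ^ q = x" by (simp_all add: subf_iff)
  hence "x ^ (q ^ Suc j) = x" by (simp add: power_mult mult.commute)
  thus ?case by (simp add: subf_iff)
qed

lemma subf_n: "(x::'a) \<in> subf q n" by (simp add: subf_iff frob_n)

end



lemma roots_le:
  fixes P :: "'a::field poly"
  assumes "coeff P N \<noteq> 0" "degree P \<le> N"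
  shows "card {x. poly P x = 0} \<le> N"
proof -
  have "P \<noteq> 0" using assms(1) by auto
  hence "card {x. poly P x = 0} \<le> degree P" by (rule card_poly_roots_bound)
  thus ?thesis using assms(2) by simp
qed

lemma card_hom:
  fixes T :: "'a::{ab_group_add,finite} \<Rightarrow> 'a"
  assumes add: "\<And>x y. T (x + y) = T x + T y"
  shows "card (UNIV::'a set) = card (range T) * card {x. T x = 0}"
proof -
  have T0: "T 0 = 0" using add[of 0 0] by simp
  have Tdiff: "T (x - y) = T x - T y" for x y
    using add[of "x - y" y] by (simp add: algebra_simps)
  have fib: "card {x. T x = y} = card {x. T x = 0}" if "y \<in> range T" for y
  proof -
    obtain x0 where y: "y = T x0" using \<open>y \<in> range T\<close> by auto
    have e1: "x \<in> (\<lambda>z. x0 + z) ` {x. T x = 0}" if "T x = y" for x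
    proof -
      have "T (x - x0) = 0" using y Tdiff that by simp
      moreover have "x = x0 + (x - x0)" by simp
      ultimately show ?thesis by blast
    qed
    have e2: "T x = y" if "x \<in> (\<lambda>z. x0 + z) ` {x. T x = 0}" for x
      using that add y by auto
    have "{x. T x = y} = (\<lambda>z. x0 + z) ` {x. T x = 0}" using e1 e2 by blast
    moreover have "inj (\<lambda>z. x0 + z)" by (auto intro: injI)
    ultimately show ?thesis by (simp add: card_image inj_on_def)
  qed
  have "UNIV = (\<Union>y\<in>range T. {x. T x = y})" by auto
  hence "card (UNIV::'a set) = card (\<Union>y\<in>range T. {x. T x = y})" by simp
  also have "\<dots> = (\<Sum>y\<in>range T. card {x. T x = y})"
    by (rule card_UN_disjoint) auto
  also have "\<dots> = (\<Sum>y\<in>range T. card {x. T x = 0})" using fib by simp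
  also have "\<dots> = card (range T) * card {x. T x = 0}" by simp
  finally show ?thesis .
qed

context ff
begin

lemma card_subf_le: assumes "j \<ge> 1" shows "card (subf q j :: 'a set) \<le> q ^ j"
proof -
  define P :: "'a poly" where "P = monom 1 (q ^ j) - monom 1 1"
  have "q ^ 1 \<le> q ^ j" by (rule power_increasing) (use assms q_pos in auto)
  hence qj: "q ^ j \<ge> 2" using q_ge2 by simp
  have "coeff P (q ^ j) = 1" using qj by (simp add: P_def coeff_monom)
  moreover have "degree P \<le> q ^ j" unfolding P_def
    by (rule order.trans[OF degree_diff_le_max]) (use qj in \<open>auto simp: degree_monom_eq\<close>)
  ultimately have "card {x. poly P x = 0} \<le> q ^ j" by (intro roots_le) auto
  moreover have "{x. poly P x = 0} = subf q j" by (auto simp: P_def poly_monom subf_iff)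
  ultimately show ?thesis by simp
qed

lemma card_subf: assumes "j dvd n" shows "card (subf q j :: 'a set) = q ^ j"
proof -
  obtain l where nl: "n = j * l" using assms by auto
  have "j \<noteq> 0" "l \<noteq> 0" using nl n_pos by auto
  hence j1: "j \<ge> 1" and l1: "l \<ge> 1" by auto
  define Q where "Q = q ^ j"
  have "q ^ 1 \<le> q ^ j" by (rule power_increasing) (use j1 q_pos in auto)
  hence Q2: "Q \<ge> 2" using q_ge2 by (simp add: Q_def)
  have Qi: "Q ^ i = q ^ (j * i)" for i by (simp add: Q_def power_mult)
  define T :: "'a \<Rightarrow> 'a" where "T x = x ^ Q - x" for x
  have Tadd: "T (x + y) = T x + T y" for x y unfolding T_def Q_def by (simp add: frob_add)
  have ker: "{x. T x = 0} = subf q j" by (auto simp: T_def Q_def subf_iff)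
  define S :: "'a poly" where "S = (\<Sum>i<l. monom 1 (Q ^ i))"
  have rng: "range T \<subseteq> {y. poly S y = 0}"
  proof
    fix y assume "y \<in> range T"
    then obtain x where y: "y = x ^ Q - x" by (auto simp: T_def)
    have "poly S y = (\<Sum>i<l. y ^ (Q ^ i))" by (simp add: S_def poly_sum poly_monom)
    also have "\<dots> = (\<Sum>i<l. x ^ (Q ^ Suc i) - x ^ (Q ^ i))"
    proof (intro sum.cong refl)
      fix i
      have "y ^ (Q ^ i) = (x ^ Q) ^ (Q ^ i) - x ^ (Q ^ i)"
        using frob_diff[of "x ^ Q" x "j * i"] by (simp add: Qi y)
      also have "(x ^ Q) ^ (Q ^ i) = x ^ (Q ^ Suc i)" by (simp add: power_mult)
      finally show "y ^ (Q ^ i) = x ^ (Q ^ Suc i) - x ^ (Q ^ i)" .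
    qed
    also have "\<dots> = x ^ (Q ^ l) - x ^ (Q ^ 0)" by (rule sum_lessThan_telescope)
    also have "\<dots> = 0" using frob_n by (simp add: Qi nl)
    finally show "y \<in> {y. poly S y = 0}" by simp
  qed
  have inj: "inj (\<lambda>i. Q ^ i)" using Q2 by (auto intro!: injI simp: power_inject_exp)
  have "coeff S (Q ^ (l - 1)) = 1"
  proof -
    have "coeff S (Q ^ (l - 1)) = (\<Sum>i<l. if Q ^ (l-1) = Q ^ i then 1 else 0)"
      by (simp add: S_def coeff_sum coeff_monom eq_commute)
    also have "\<dots> = (\<Sum>i\<in>{l-1}. 1)"
      using l1 Q2 by (intro sum.mono_neutral_cong_right) (auto simp: power_inject_exp)
    finally show ?thesis by simp
  qed
  moreover have "degree S \<le> Q ^ (l - 1)" unfolding S_def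
  proof (rule degree_sum_le)
    fix i assume "i \<in> {..<l}"
    hence "Q ^ i \<le> Q ^ (l - 1)" using Q2 by (intro power_increasing) auto
    thus "degree (monom (1::'a) (Q ^ i)) \<le> Q ^ (l - 1)" by (simp add: degree_monom_eq)
  qed simp
  ultimately have cS: "card {y. poly S y = 0} \<le> Q ^ (l - 1)" by (intro roots_le) auto
  have "card (range T) \<le> Q ^ (l - 1)"
  proof -
    have "card (range T) \<le> card {y. poly S y = 0}" by (rule card_mono[OF _ rng]) simp
    thus ?thesis using cS by linarith
  qed
  moreover have "Q ^ l = card (range T) * card (subf q j :: 'a set)"
    using card_hom[OF Tadd] ker card_F by (simp add: Qi nl)
  moreover have "Q ^ l = Q * Q ^ (l - 1)" using l1 by (cases l) auto
  ultimately have "Q * Q ^ (l - 1) \<le> Q ^ (l - 1) * card (subf q j :: 'a set)"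
    by simp
  hence "Q \<le> card (subf q j :: 'a set)" using Q2 by (simp add: mult.commute)
  with card_subf_le[OF j1] show ?thesis by (simp add: Q_def)
qed

end


definition lin :: "'a::field \<Rightarrow> 'a vec3 \<Rightarrow> 'a \<Rightarrow> 'a vec3 \<Rightarrow> 'a vec3" where
  "lin a u b v = vadd (vsmul a u) (vsmul b v)"

lemma vsmul_1[simp]: "vsmul 1 w = w" by (simp add: vsmul_def)
lemma vsmul_vsmul[simp]: "vsmul a (vsmul b w) = vsmul (a * b) w"
  by (simp add: vsmul_def mult.assoc)
lemma vsmul_lin: "vsmul c (lin a u b v) = lin (c * a) u (c * b) v"
  by (simp add: lin_def vsmul_def vadd_def algebra_simps)
lemma lin_0_left[simp]: "lin 0 u b v = vsmul b v" by (simp add: lin_def vsmul_def vadd_def)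
lemma lin_0_right[simp]: "lin a u 0 v = vsmul a u" by (simp add: lin_def vsmul_def vadd_def)
lemma vsmul_0[simp]: "vsmul 0 w = (0,0,0)" by (simp add: vsmul_def)
lemma vsmul_eq_0: "vsmul c w = (0,0,0) \<longleftrightarrow> c = 0 \<or> w = (0,0,0)"
  by (cases w) (auto simp: vsmul_def)
lemma lin_comp: "lin a (lin a1 u b1 v) b (lin a2 u b2 v) = lin (a*a1 + b*a2) u (a*b1 + b*b2) v"
  by (simp add: lin_def vsmul_def vadd_def algebra_simps)
lemma lin_third: "snd (snd (lin a u b v)) = a * snd (snd u) + b * snd (snd v)"
  by (simp add: lin_def vsmul_def vadd_def)
lemma lin_fst: "fst (lin a u b v) = a * fst u + b * fst v"
  by (simp add: lin_def vsmul_def vadd_def)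
lemma lin_snd1: "fst (snd (lin a u b v)) = a * fst (snd u) + b * fst (snd v)"
  by (simp add: lin_def vsmul_def vadd_def)

lemma indep_eq:
  assumes "indepN u v" "lin a u b v = lin a' u b' v"
  shows "a = a' \<and> b = b'"
proof -
  have "vadd (vsmul (a - a') u) (vsmul (b - b') v) = (0,0,0)"
    using assms(2) unfolding lin_def vadd_def vsmul_def
    by (auto simp: algebra_simps prod_eq_iff)
  hence "a - a' = 0 \<and> b - b' = 0" using assms(1) unfolding indepN_def by blast
  thus ?thesis by simp
qed

lemma indep_0: "indepN u v \<Longrightarrow> lin a u b v = (0,0,0) \<Longrightarrow> a = 0 \<and> b = 0"
  unfolding indepN_def lin_def by auto

lemma indep_nz: "indepN u v \<Longrightarrow> (a, b) \<noteq> (0, 0) \<Longrightarrow> lin a u b v \<noteq> (0,0,0)"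
  using indep_0 by blast

lemma indep_u_nz: "indepN u v \<Longrightarrow> u \<noteq> (0,0,0)"
  using indep_nz[of u v 1 0] by simp
lemma indep_v_nz: "indepN u v \<Longrightarrow> v \<noteq> (0,0,0)"
  using indep_nz[of u v 0 1] by simp

lemma ptN_self: "w \<in> ptN w" unfolding ptN_def by (rule CollectI, rule exI[of _ 1]) simp
lemma ptN_scale: "c \<noteq> 0 \<Longrightarrow> ptN (vsmul c w) = ptN w"
  unfolding ptN_def
proof (intro Set.set_eqI iffI)
  fix x assume c: "c \<noteq> 0" and "x \<in> {vsmul d (vsmul c w) |d. d \<noteq> 0}"
  then obtain d where "x = vsmul (d * c) w" "d \<noteq> 0" by auto
  with c show "x \<in> {vsmul d w |d. d \<noteq> 0}" by auto
next
  fix x assume c: "c \<noteq> 0" and "x \<in> {vsmul d w |d. d \<noteq> 0}"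
  then obtain d where "x = vsmul ((d / c) * c) w" "d \<noteq> 0" by auto
  with c show "x \<in> {vsmul d (vsmul c w) |d. d \<noteq> 0}"
    by (intro CollectI exI[of _ "d / c"]) auto
qed
lemma ptN_eq: "ptN w = ptN w' \<Longrightarrow> \<exists>c. c \<noteq> 0 \<and> w' = vsmul c w"
  using ptN_self[of w'] unfolding ptN_def by auto

lemma phi_ptN0:
  assumes w3: "w3 \<noteq> 0"
  shows "phi q (ptN (w1, w2, w3)) = ptS q (vsmul (1 / w3) (w1, w2, w3))"
proof -
  let ?w = "(w1, w2, w3)"
  let ?wz = "vsmul (1 / w3) ?w"
  have w0: "?wz = (w1 / w3, w2 / w3, 1)" using w3 by (simp add: vsmul_def)
  have "(THE x. \<exists>a b. x = (a, b, 1) \<and> ptN ?w = ptN x) = ?wz"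
  proof (rule the_equality)
    show "\<exists>a b. ?wz = (a, b, 1) \<and> ptN ?w = ptN ?wz" using w0 ptN_scale[of "1/w3" ?w] w3 by auto
  next
    fix x assume "\<exists>a b. x = (a, b, 1) \<and> ptN ?w = ptN x"
    then obtain a b where x: "x = (a, b, 1)" "ptN ?w = ptN x" by auto
    hence "ptN ?wz = ptN x" using ptN_scale[of "1/w3" ?w] w3 by simp
    then obtain c where "c \<noteq> 0" "x = vsmul c ?wz" using ptN_eq by blast
    hence "x = (c * (w1 / w3), c * (w2 / w3), c * 1)" using w0 by (simp add: vsmul_def)
    thus "x = ?wz" using x(1) w0 by simp
  qed
  thus ?thesis by (simp add: phi_def)
qed

lemma phi_ptN:
  assumes "snd (snd w) \<noteq> 0"
  shows "phi q (ptN w) = ptS q (vsmul (1 / snd (snd w)) w)"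
  using phi_ptN0[of "snd (snd w)" q "fst w" "fst (snd w)"] assms by simp

context ff
begin

lemma ptS_self: "(w::'a vec3) \<in> ptS q w" unfolding ptS_def
  by (rule CollectI, rule exI[of _ 1]) (simp add: subf_iff)
lemma ptS_scale: "c \<in> subf q 1 \<Longrightarrow> c \<noteq> 0 \<Longrightarrow> ptS q (vsmul c (w::'a vec3)) = ptS q w"
  unfolding ptS_def
proof (intro Set.set_eqI iffI)
  fix x assume c: "c \<in> subf q 1" "c \<noteq> 0" and "x \<in> {vsmul d (vsmul c w) |d. d \<in> subf q 1 \<and> d \<noteq> 0}"
  then obtain d where "x = vsmul (d * c) w" "d \<noteq> 0" "d \<in> subf q 1" by auto
  with c show "x \<in> {vsmul d w |d. d \<in> subf q 1 \<and> d \<noteq> 0}" by (auto intro: subf_mult)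
next
  fix x assume c: "c \<in> subf q 1" "c \<noteq> 0" and "x \<in> {vsmul d w |d. d \<in> subf q 1 \<and> d \<noteq> 0}"
  then obtain d where "x = vsmul ((d / c) * c) w" "d \<noteq> 0" "d \<in> subf q 1" by auto
  with c show "x \<in> {vsmul d (vsmul c w) |d. d \<in> subf q 1 \<and> d \<noteq> 0}"
    by (intro CollectI exI[of _ "d / c"]) (auto intro: subf_divide)
qed
lemma ptS_eq: "ptS q w = ptS q (w'::'a vec3) \<Longrightarrow> \<exists>c. c \<in> subf q 1 \<and> c \<noteq> 0 \<and> w' = vsmul c w"
  using ptS_self[of w'] unfolding ptS_def by auto

lemma card_subline:
  assumes ind: "indepN u v" and j: "j dvd n"
  shows "card (subline q j u (v::'a vec3)) = q ^ j + 1"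
proof -
  let ?K = "subf q j :: 'a set"
  define f where "f t = ptN (lin 1 u t v)" for t
  let ?z = "ptN (lin 0 u 1 v)"
  have eq: "subline q j u v = f ` ?K \<union> {?z}"
  proof (intro Set.set_eqI iffI)
    fix P assume "P \<in> subline q j u v"
    then obtain s t where st: "P = ptN (lin s u t v)" "s \<in> ?K" "t \<in> ?K" "(s, t) \<noteq> (0, 0)"
      unfolding subline_def lin_def by auto
    show "P \<in> f ` ?K \<union> {?z}"
    proof (cases "s = 0")
      case True
      hence "t \<noteq> 0" using st by auto
      have "P = ptN (vsmul t (lin 0 u 1 v))" using True st by (simp add: vsmul_lin)
      also have "\<dots> = ?z" by (rule ptN_scale) fact
      finally show ?thesis by blast
    next
      case False
      have "P = ptN (vsmul s (lin 1 u (t / s) v))" using False st by (simp add: vsmul_lin)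
      hence "P = f (t / s)" using ptN_scale False by (simp add: f_def)
      moreover have "t / s \<in> ?K" using st by (intro subf_divide)
      ultimately show ?thesis by auto
    qed
  next
    fix P assume "P \<in> f ` ?K \<union> {?z}"
    then consider t where "t \<in> ?K" "P = ptN (lin 1 u t v)" | "P = ?z" unfolding f_def by auto
    thus "P \<in> subline q j u v"
    proof cases
      case (1 t) thus ?thesis unfolding subline_def lin_def
        by (intro CollectI exI[of _ 1] exI[of _ t]) auto
    next
      case 2 thus ?thesis unfolding subline_def lin_def
        by (intro CollectI exI[of _ 0] exI[of _ 1]) auto
    qed
  qed
  have inj: "inj_on f ?K"
  proof (rule inj_onI)
    fix t t' assume "f t = f t'"
    then obtain c where "c \<noteq> 0" "lin 1 u t' v = vsmul c (lin 1 u t v)"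
      unfolding f_def using ptN_eq by blast
    hence "lin 1 u t' v = lin c u (c * t) v" by (simp add: vsmul_lin)
    from indep_eq[OF ind this] show "t = t'" by simp
  qed
  have notin: "?z \<notin> f ` ?K"
  proof
    assume "?z \<in> f ` ?K"
    then obtain t where "?z = f t" by auto
    then obtain c where "c \<noteq> 0" "lin 1 u t v = vsmul c (lin 0 u 1 v)"
      unfolding f_def using ptN_eq by metis
    hence "lin 1 u t v = lin 0 u c v" by (simp add: vsmul_lin)
    from indep_eq[OF ind this] show False by simp
  qed
  have "card (f ` ?K \<union> {?z}) = card (f ` ?K) + 1" using notin by simp
  also have "card (f ` ?K) = card ?K" using inj by (rule card_image)
  finally show ?thesis using eq card_subf[OF j] by simp
qed

end


lemma det_zero_prop:
  fixes s1 t1 s2 t2 :: "'a::field"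
  assumes "s1 * t2 = s2 * t1" "(s1, t1) \<noteq> (0, 0)"
  shows "\<exists>c. s2 = c * s1 \<and> t2 = c * t1"
proof (cases "s1 = 0")
  case True
  hence "t1 \<noteq> 0" using assms by auto
  thus ?thesis using True assms by (intro exI[of _ "t2 / t1"]) (auto simp: field_simps)
next
  case False
  thus ?thesis using assms by (intro exI[of _ "s2 / s1"]) (auto simp: field_simps)
qed

lemma det_solve:
  fixes s1 t1 s2 t2 X Y :: "'a::field"
  assumes "s1 * t2 - s2 * t1 \<noteq> 0" "X * s1 + Y * s2 = 0" "X * t1 + Y * t2 = 0"
  shows "X = 0 \<and> Y = 0"
proof -
  have "X * (s1 * t2 - s2 * t1) = t2 * (X * s1 + Y * s2) - s2 * (X * t1 + Y * t2)"
    by (simp add: algebra_simps)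
  hence "X * (s1 * t2 - s2 * t1) = 0" using assms by simp
  moreover have "Y * (s1 * t2 - s2 * t1) = s1 * (X * t1 + Y * t2) - t1 * (X * s1 + Y * s2)"
    by (simp add: algebra_simps)
  hence "Y * (s1 * t2 - s2 * t1) = 0" using assms by simp
  ultimately show ?thesis using assms(1) by simp
qed

lemma indepN_lin: "indepN u v \<longleftrightarrow> (\<forall>a b. lin a u b v = (0,0,0) \<longrightarrow> a = 0 \<and> b = 0)"
  by (simp add: indepN_def lin_def)

context ff
begin

lemma three_pts:
  assumes ind: "indepN u (v::'a vec3)"
    and P: "P1 \<in> subline q k u v" "P2 \<in> subline q k u v" "P3 \<in> subline q k u v"
    and dist: "P1 \<noteq> P2" "P1 \<noteq> P3" "P2 \<noteq> P3"
  shows "\<exists>A B. indepN A B \<and> P1 = ptN A \<and> P2 = ptN B \<and> P3 = ptN (lin 1 A 1 B) \<and>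
    (\<forall>s t. s \<in> subf q 1 \<longrightarrow> t \<in> subf q 1 \<longrightarrow> (s, t) \<noteq> (0, 0) \<longrightarrow>
       ptN (lin s A t B) \<in> subline q k u v)"
proof -
  let ?K = "subf q k :: 'a set"
  obtain s1 t1 where 1: "P1 = ptN (lin s1 u t1 v)" "s1 \<in> ?K" "t1 \<in> ?K" "(s1, t1) \<noteq> (0, 0)"
    using P(1) unfolding subline_def lin_def by auto
  obtain s2 t2 where 2: "P2 = ptN (lin s2 u t2 v)" "s2 \<in> ?K" "t2 \<in> ?K" "(s2, t2) \<noteq> (0, 0)"
    using P(2) unfolding subline_def lin_def by auto
  obtain s3 t3 where 3: "P3 = ptN (lin s3 u t3 v)" "s3 \<in> ?K" "t3 \<in> ?K" "(s3, t3) \<noteq> (0, 0)"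
    using P(3) unfolding subline_def lin_def by auto
  define x1 where "x1 = lin s1 u t1 v"
  define x2 where "x2 = lin s2 u t2 v"
  define x3 where "x3 = lin s3 u t3 v"
  have x3nz: "x3 \<noteq> (0,0,0)" using indep_nz[OF ind 3(4)] by (simp add: x3_def)
  define \<delta> where "\<delta> = s1 * t2 - s2 * t1"
  have \<delta>: "\<delta> \<noteq> 0"
  proof
    assume "\<delta> = 0"
    then obtain c where c: "s2 = c * s1" "t2 = c * t1" using det_zero_prop[OF _ 1(4)]
      by (auto simp: \<delta>_def)
    hence "c \<noteq> 0" using 2(4) by auto
    have "x2 = vsmul c x1" using c by (simp add: x1_def x2_def vsmul_lin)
    hence "P2 = P1" using 1 2 ptN_scale[OF \<open>c \<noteq> 0\<close>] by (simp add: x1_def x2_def)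
    thus False using dist by simp
  qed
  define a where "a = (s3 * t2 - s2 * t3) / \<delta>"
  define b where "b = (s1 * t3 - s3 * t1) / \<delta>"
  have n1: "(s3 * t2 - s2 * t3) * s1 + (s1 * t3 - s3 * t1) * s2 = s3 * \<delta>"
    by (simp add: \<delta>_def algebra_simps)
  have n2: "(s3 * t2 - s2 * t3) * t1 + (s1 * t3 - s3 * t1) * t2 = t3 * \<delta>"
    by (simp add: \<delta>_def algebra_simps)
  have "a * s1 + b * s2 = (s3 * \<delta>) / \<delta>" unfolding n1[symmetric] a_def b_def
    by (simp add: add_divide_distrib)
  hence ab1: "a * s1 + b * s2 = s3" using \<delta> by simp
  have "a * t1 + b * t2 = (t3 * \<delta>) / \<delta>" unfolding n2[symmetric] a_def b_def
    by (simp add: add_divide_distrib)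
  hence ab2: "a * t1 + b * t2 = t3" using \<delta> by simp
  have x3: "x3 = lin a x1 b x2" by (simp add: x1_def x2_def x3_def lin_comp ab1 ab2)
  have aK: "a \<in> ?K" and bK: "b \<in> ?K" unfolding a_def b_def \<delta>_def using 1 2 3
    by (auto intro!: subf_divide subf_diff subf_mult)
  have a0: "a \<noteq> 0"
  proof
    assume "a = 0"
    hence "x3 = vsmul b x2" using x3 by simp
    hence "b \<noteq> 0" using x3nz by auto
    hence "P3 = P2" using \<open>x3 = vsmul b x2\<close> ptN_scale 2 3 by (simp add: x2_def x3_def)
    thus False using dist by simp
  qed
  have b0: "b \<noteq> 0"
  proof
    assume "b = 0"
    hence "x3 = vsmul a x1" using x3 by simp
    hence "P3 = P1" using a0 ptN_scale 1 3 by (simp add: x1_def x3_def)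
    thus False using dist by simp
  qed
  define A where "A = vsmul a x1"
  define B where "B = vsmul b x2"
  have linAB: "lin s A t B = lin (s * a * s1 + t * b * s2) u (s * a * t1 + t * b * t2) v" for s t
    by (simp add: A_def B_def x1_def x2_def vsmul_lin lin_comp mult.assoc)
  have key: "s * a = 0 \<and> t * b = 0" if "lin s A t B = (0,0,0)" for s t
  proof -
    have "s * a * s1 + t * b * s2 = 0 \<and> s * a * t1 + t * b * t2 = 0"
      using indep_0[OF ind] that linAB by metis
    thus ?thesis using det_solve[of s1 t2 s2 t1 "s * a" "t * b"] \<delta> unfolding \<delta>_def by auto
  qed
  have indAB: "indepN A B" unfolding indepN_lin using key a0 b0 by simp
  have "P1 = ptN A" using 1 ptN_scale[OF a0] by (simp add: A_def x1_def)
  moreover have "P2 = ptN B" using 2 ptN_scale[OF b0] by (simp add: B_def x2_def)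
  moreover have "P3 = ptN (lin 1 A 1 B)" using 3 x3 by (simp add: A_def B_def lin_def x3_def)
  moreover have "ptN (lin s A t B) \<in> subline q k u v"
    if st: "s \<in> subf q 1" "t \<in> subf q 1" "(s, t) \<noteq> (0, 0)" for s t
  proof -
    have sK: "s \<in> ?K" "t \<in> ?K" using st subf1_sub by auto
    have "(s * a * s1 + t * b * s2, s * a * t1 + t * b * t2) \<noteq> (0, 0)"
    proof
      assume "(s * a * s1 + t * b * s2, s * a * t1 + t * b * t2) = (0, 0)"
      hence "s * a = 0 \<and> t * b = 0" using det_solve[of s1 t2 s2 t1 "s * a" "t * b"] \<delta>
        unfolding \<delta>_def by auto
      thus False using a0 b0 st(3) by auto
    qed
    moreover have "s * a * s1 + t * b * s2 \<in> ?K" "s * a * t1 + t * b * t2 \<in> ?K"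
      using sK aK bK 1 2 by (auto intro!: subf_add subf_mult)
    ultimately show ?thesis unfolding linAB subline_def
      by (intro CollectI exI[of _ "s * a * s1 + t * b * s2"] exI[of _ "s * a * t1 + t * b * t2"])
         (simp add: lin_def)
  qed
  ultimately show ?thesis using indAB by blast
qed

end


context ff
begin

lemma poly_map_frob:
  "poly (map_poly (\<lambda>x::'a. x ^ q) f) (y ^ q) = (poly f y) ^ q"
proof -
  have nz: "x \<noteq> 0 \<Longrightarrow> x ^ q \<noteq> 0" for x :: 'a by simp
  have z: "(0::'a) ^ q = 0" using q_pos by simp
  have "poly (map_poly (\<lambda>x. x ^ q) f) (y ^ q) = (\<Sum>i\<le>degree f. (coeff f i) ^ q * (y ^ q) ^ i)"
    by (simp add: poly_altdef degree_map_poly[OF nz] coeff_map_poly[of "\<lambda>x. x ^ q", OF z])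
  also have "\<dots> = (\<Sum>i\<le>degree f. (coeff f i * y ^ i) ^ q)"
    by (simp add: power_mult_distrib flip: power_mult) (simp add: mult.commute)
  also have "\<dots> = (\<Sum>i\<le>degree f. coeff f i * y ^ i) ^ q"
    using frob_sum[of "\<lambda>i. coeff f i * y ^ i" "{..degree f}" 1] by simp
  finally show ?thesis by (simp add: poly_altdef)
qed

lemma poly_eq_all:
  fixes f g :: "'a poly"
  assumes "\<And>x. poly f x = poly g x" "degree f < q ^ n" "degree g < q ^ n"
  shows "f = g"
  using assms by (intro poly_eqI_degree[of UNIV]) (auto simp: card_F)

lemma map_frob_eq:
  fixes f g :: "'a poly"
  assumes "\<And>x. (poly f x) ^ q = poly g (x ^ q)" "degree f < q ^ n" "degree g < q ^ n"
  shows "map_poly (\<lambda>x. x ^ q) f = g"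
proof (rule poly_eq_all)
  fix y :: 'a
  obtain x where x: "x ^ (q ^ 1) = y" using frob_surj by blast
  show "poly (map_poly (\<lambda>x. x ^ q) f) y = poly g y"
    using x poly_map_frob[of f x] assms(1)[of x] by simp
next
  have "x \<noteq> 0 \<Longrightarrow> x ^ q \<noteq> 0" for x :: 'a by simp
  thus "degree (map_poly (\<lambda>x. x ^ q) f) < q ^ n" using assms(2) by (simp add: degree_map_poly)
qed (use assms in auto)

lemma deg_lt_card: "d \<le> n \<Longrightarrow> d < q ^ n"
proof -
  assume "d \<le> n"
  moreover have "n < 2 ^ n" by (rule less_exp)
  moreover have "(2::nat) ^ n \<le> q ^ n" using q_ge2 by (intro power_mono) auto
  ultimately show ?thesis by linarith
qed

end

locale nrcl = ff q n p e T for q n p e :: nat and T :: "'a::{field,finite} itself" +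
  fixes \<mu> :: 'a
  assumes mu_notin: "\<mu> \<notin> subf q 1"
begin

definition dg :: nat where "dg = (LEAST j. j \<ge> 1 \<and> \<mu> ^ (q ^ j) = \<mu>)"
definition ms :: "nat \<Rightarrow> 'a" where "ms i = \<mu> ^ (q ^ i)"
definition L :: "nat \<Rightarrow> 'a poly" where "L i = [:ms i, 1:]"
definition Pl :: "nat \<Rightarrow> 'a poly" where "Pl l = (\<Prod>i\<in>{..<dg}-{l}. L i)"
definition Np :: "'a poly" where "Np = (\<Prod>i<dg. L i)"

lemma dg_ex: "n \<ge> 1 \<and> \<mu> ^ (q ^ n) = \<mu>" using n_pos frob_n by simp

lemma dg_prop: "dg \<ge> 1" "\<mu> ^ (q ^ dg) = \<mu>"
  using LeastI_ex[of "\<lambda>j. j \<ge> 1 \<and> \<mu> ^ (q ^ j) = \<mu>"] dg_ex unfolding dg_def by blast+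

lemma dg_le: "dg \<le> n" unfolding dg_def using dg_ex by (intro Least_le) 

lemma dg_min: "1 \<le> j \<Longrightarrow> j < dg \<Longrightarrow> \<mu> ^ (q ^ j) \<noteq> \<mu>"
  unfolding dg_def using not_less_Least by blast

lemma dg2: "dg \<ge> 2"
proof -
  have "dg \<noteq> 1" using dg_prop(2) mu_notin by (auto simp: subf_iff)
  thus ?thesis using dg_prop(1) by simp
qed

lemma ms_0: "ms 0 = \<mu>" by (simp add: ms_def)
lemma ms_Suc: "(ms i) ^ q = ms (Suc i)"
  using frob_comp[of \<mu> i 1] by (simp add: ms_def)
lemma ms_dg: "ms dg = ms 0" using dg_prop by (simp add: ms_def)

lemma ms_inj: assumes "i < dg" "j < dg" "ms i = ms j" shows "i = j"
proof (rule ccontr)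
  assume ne: "i \<noteq> j"
  have *: False if "a < b" "b < dg" "ms a = ms b" for a b
  proof -
    have "ms b = (ms (b - a)) ^ (q ^ a)" using frob_comp[of \<mu> "b - a" a] that(1)
      by (simp add: ms_def)
    hence "(ms (b - a)) ^ (q ^ a) = \<mu> ^ (q ^ a)" using that by (simp add: ms_def)
    hence "ms (b - a) = \<mu>" by (rule frob_inj)
    thus False using dg_min[of "b - a"] that by (simp add: ms_def)
  qed
  show False using ne assms * by (metis linorder_neqE_nat)
qed

lemma L_nz: "L i \<noteq> 0" by (simp add: L_def)
lemma deg_L: "degree (L i) = 1" by (simp add: L_def)
lemma lc_L: "lead_coeff (L i) = 1" by (simp add: L_def)
lemma poly_L: "poly (L i) x = ms i + x" by (simp add: L_def)

lemma deg_Np: "degree Np = dg"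
  unfolding Np_def by (subst degree_prod_eq_sum_degree) (auto simp: L_nz deg_L)
lemma coeff_Np_dg: "coeff Np dg = 1"
  using lead_coeff_prod[of L "{..<dg}"] deg_Np by (simp add: Np_def lc_L)
lemma deg_Pl: "l < dg \<Longrightarrow> degree (Pl l) = dg - 1"
  unfolding Pl_def by (subst degree_prod_eq_sum_degree) (auto simp: L_nz deg_L)

lemma Np_split: "Np = L 0 * Pl 0"
proof -
  have "0 \<in> {..<dg}" using dg_prop by auto
  thus ?thesis unfolding Np_def Pl_def by (simp add: prod.remove)
qed

lemma poly_Np: "poly Np x = (\<Prod>i<dg. ms i + x)" by (simp add: Np_def poly_prod poly_L)
lemma poly_Pl: "poly (Pl l) x = (\<Prod>i\<in>{..<dg}-{l}. ms i + x)" by (simp add: Pl_def poly_prod poly_L)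

lemma prod_shift:
  fixes g :: "nat \<Rightarrow> 'a"
  assumes "g dg = g 0"
  shows "(\<Prod>i<dg. g (Suc i)) = (\<Prod>i<dg. g i)"
proof -
  obtain d' where d: "dg = Suc d'" using dg_prop by (cases dg) auto
  have "(\<Prod>i<dg. g i) = g 0 * (\<Prod>i<d'. g (Suc i))" unfolding d by (rule prod.lessThan_Suc_shift)
  moreover have "(\<Prod>i<dg. g (Suc i)) = (\<Prod>i<d'. g (Suc i)) * g dg" unfolding d by simp
  ultimately show ?thesis using assms by (simp add: mult.commute)
qed

lemma Np_frob: "map_poly (\<lambda>x. x ^ q) Np = Np"
proof (rule map_frob_eq)
  fix x :: 'a
  have "(poly Np x) ^ q = (\<Prod>i<dg. (ms i + x) ^ q)" by (simp add: poly_Np prod_power_distrib)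
  also have "\<dots> = (\<Prod>i<dg. ms (Suc i) + x ^ q)"
    using frob_add[of _ _ 1] by (simp add: ms_Suc)
  also have "\<dots> = (\<Prod>i<dg. ms i + x ^ q)" by (rule prod_shift) (simp add: ms_dg)
  finally show "(poly Np x) ^ q = poly Np (x ^ q)" by (simp add: poly_Np)
qed (use deg_Np dg_le deg_lt_card in auto)

lemma coeff_Np_subf: "coeff Np i \<in> subf q 1"
proof -
  have z: "(0::'a) ^ q = 0" using q_pos by simp
  have "coeff (map_poly (\<lambda>x. x ^ q) Np) i = coeff Np i" by (simp add: Np_frob)
  thus ?thesis by (simp add: coeff_map_poly[of "\<lambda>x. x ^ q", OF z] subf_iff)
qed

lemma Pl_frob: assumes "Suc l < dg" shows "map_poly (\<lambda>x. x ^ q) (Pl l) = Pl (Suc l)"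
proof (rule map_frob_eq)
  fix x :: 'a
  let ?g = "\<lambda>i. ms i + x ^ q"
  have "(poly (Pl l) x) ^ q = (\<Prod>i\<in>{..<dg}-{l}. (ms i + x) ^ q)"
    by (simp add: poly_Pl prod_power_distrib)
  also have "\<dots> = (\<Prod>i\<in>{..<dg}-{l}. ?g (Suc i))"
    using frob_add[of _ _ 1] by (simp add: ms_Suc)
  also have "\<dots> = (\<Prod>i\<in>Suc ` ({..<dg}-{l}). ?g i)"
    by (subst prod.reindex) auto
  also have "Suc ` ({..<dg}-{l}) = insert dg ({1..<dg} - {Suc l})"
  proof (rule Set.set_eqI)
    fix x show "x \<in> Suc ` ({..<dg}-{l}) \<longleftrightarrow> x \<in> insert dg ({1..<dg} - {Suc l})"
      using assms by (cases x) auto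
  qed
  also have "(\<Prod>i\<in>insert dg ({1..<dg} - {Suc l}). ?g i) = ?g dg * (\<Prod>i\<in>{1..<dg} - {Suc l}. ?g i)"
    by (rule prod.insert) auto
  also have "?g dg = ?g 0" by (simp add: ms_dg)
  also have "?g 0 * (\<Prod>i\<in>{1..<dg} - {Suc l}. ?g i) = (\<Prod>i\<in>insert 0 ({1..<dg} - {Suc l}). ?g i)"
    by (rule prod.insert[symmetric]) auto
  also have "insert 0 ({1..<dg} - {Suc l}) = {..<dg} - {Suc l}"
    using dg_prop by auto
  finally show "(poly (Pl l) x) ^ q = poly (Pl (Suc l)) (x ^ q)" by (simp add: poly_Pl)
qed (use deg_Pl assms dg_le deg_lt_card in auto)

end


context nrcl
begin

definition psi :: "(nat \<Rightarrow> 'a) \<Rightarrow> 'a poly \<Rightarrow> 'a" where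
  "psi c f = (\<Sum>i<Suc dg. c i * coeff f i)"

lemma psi_frob:
  assumes "\<forall>i. c i \<in> subf q 1"
  shows "psi c (map_poly (\<lambda>x. x ^ q) f) = (psi c f) ^ q"
proof -
  have z: "(0::'a) ^ q = 0" using q_pos by simp
  have "(psi c f) ^ q = (\<Sum>i<Suc dg. (c i * coeff f i) ^ q)"
    unfolding psi_def using frob_sum[of "\<lambda>i. c i * coeff f i" "{..<Suc dg}" 1] by simp
  also have "\<dots> = (\<Sum>i<Suc dg. c i * (coeff f i) ^ q)"
    using assms by (simp add: power_mult_distrib subf_iff)
  finally show ?thesis by (simp add: psi_def coeff_map_poly[of "\<lambda>x. x ^ q", OF z])
qed

lemma psi_sum: "psi c (\<Sum>l\<in>A. smult (a l) (f l)) = (\<Sum>l\<in>A. a l * psi c (f l))"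
proof -
  have "psi c (\<Sum>l\<in>A. smult (a l) (f l)) = (\<Sum>i<Suc dg. \<Sum>l\<in>A. a l * (c i * coeff (f l) i))"
    unfolding psi_def by (simp add: coeff_sum sum_distrib_left mult_ac del: sum.lessThan_Suc)
  also have "\<dots> = (\<Sum>l\<in>A. \<Sum>i<Suc dg. a l * (c i * coeff (f l) i))" by (rule sum.swap)
  also have "\<dots> = (\<Sum>l\<in>A. a l * psi c (f l))"
    unfolding psi_def by (simp add: sum_distrib_left del: sum.lessThan_Suc)
  finally show ?thesis .
qed

lemma psi_monom: "i < Suc dg \<Longrightarrow> psi c (monom 1 i) = c i"
proof -
  assume i: "i < Suc dg"
  have "psi c (monom 1 i) = (\<Sum>j<Suc dg. if j = i then c j else 0)"
    unfolding psi_def by (intro sum.cong refl) (auto simp: coeff_monom)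
  also have "\<dots> = c i" using i by simp
  finally show ?thesis .
qed

lemma lagrange:
  assumes i: "i < dg"
  shows "monom 1 i = (\<Sum>l<dg. smult ((- ms l) ^ i / poly (Pl l) (- ms l)) (Pl l))"
    (is "_ = ?R")
proof (rule poly_eqI_degree[of "(\<lambda>l. - ms l) ` {..<dg}"])
  have inj: "inj_on (\<lambda>l. - ms l) {..<dg}" using ms_inj by (auto intro!: inj_onI)
  hence cA: "card ((\<lambda>l. - ms l) ` {..<dg}) = dg" by (simp add: card_image)
  show "degree (monom (1::'a) i) < card ((\<lambda>l. - ms l) ` {..<dg})"
    using i cA by (simp add: degree_monom_eq)
  have "degree ?R \<le> dg - 1"
  proof (rule degree_sum_le)
    fix l assume "l \<in> {..<dg}"
    thus "degree (smult ((- ms l) ^ i / poly (Pl l) (- ms l)) (Pl l)) \<le> dg - 1"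
      using deg_Pl degree_smult_le by (metis lessThan_iff order_trans order.refl)
  qed simp
  thus "degree ?R < card ((\<lambda>l. - ms l) ` {..<dg})" using cA dg_prop by simp
  fix x assume "x \<in> (\<lambda>l. - ms l) ` {..<dg}"
  then obtain l0 where l0: "l0 < dg" "x = - ms l0" by auto
  have van: "poly (Pl l) x = 0" if "l < dg" "l \<noteq> l0" for l
    unfolding poly_Pl l0(2) using that l0 by (intro prod_zero) auto
  have nvan: "poly (Pl l0) x \<noteq> 0"
    unfolding poly_Pl l0(2) using ms_inj l0 by auto
  have "poly ?R x = (\<Sum>l<dg. (- ms l) ^ i / poly (Pl l) (- ms l) * poly (Pl l) x)"
    by (simp add: poly_sum)
  also have "\<dots> = (- ms l0) ^ i / poly (Pl l0) (- ms l0) * poly (Pl l0) x +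
      (\<Sum>l\<in>{..<dg}-{l0}. (- ms l) ^ i / poly (Pl l) (- ms l) * poly (Pl l) x)"
    using l0 by (subst sum.remove) auto
  also have "(\<Sum>l\<in>{..<dg}-{l0}. (- ms l) ^ i / poly (Pl l) (- ms l) * poly (Pl l) x) = 0"
    using van by (intro sum.neutral) auto
  also have "(- ms l0) ^ i / poly (Pl l0) (- ms l0) * poly (Pl l0) x = x ^ i"
    using nvan l0 by simp
  finally show "poly (monom 1 i) x = poly ?R x" by (simp add: poly_monom)
qed

lemma psi_zero:
  assumes c: "\<forall>i. c i \<in> subf q 1" and hN: "psi c Np = 0" and hP: "psi c (Pl 0) = 0"
  shows "\<forall>i<Suc dg. c i = 0"
proof -
  have Pl0: "l < dg \<Longrightarrow> psi c (Pl l) = 0" for l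
  proof (induction l)
    case 0 thus ?case using hP by simp
  next
    case (Suc l)
    have "psi c (Pl (Suc l)) = psi c (map_poly (\<lambda>x. x ^ q) (Pl l))"
      using Pl_frob[of l] Suc.prems by simp
    also have "\<dots> = (psi c (Pl l)) ^ q" by (rule psi_frob[OF c])
    finally have "psi c (Pl (Suc l)) = (psi c (Pl l)) ^ q" .
    moreover have "psi c (Pl l) = 0" using Suc by simp
    ultimately show ?case using q_pos by simp
  qed
  have low: "c i = 0" if "i < dg" for i
  proof -
    have "c i = psi c (monom 1 i)" using that by (simp add: psi_monom)
    also have "\<dots> = (\<Sum>l<dg. ((- ms l) ^ i / poly (Pl l) (- ms l)) * psi c (Pl l))"
      by (subst lagrange[OF that]) (rule psi_sum)
    also have "\<dots> = 0" using Pl0 by simp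
    finally show ?thesis .
  qed
  have "psi c Np = (\<Sum>i<dg. c i * coeff Np i) + c dg * coeff Np dg"
    unfolding psi_def by simp
  hence "c dg = 0" using hN low coeff_Np_dg by simp
  thus ?thesis using low less_Suc_eq by auto
qed

end


locale nrcv = nrcl q n p e T \<mu> for q n p e :: nat and T :: "'a::{field,finite} itself" and \<mu> :: 'a +
  fixes a1 a2 b1 b2 :: 'a
  assumes indAB: "indepN (a1, a2, \<mu>) (b1, b2, 1)"
begin

abbreviation "A \<equiv> (a1, a2, \<mu>)"
abbreviation "B \<equiv> (b1, b2, 1::'a)"
definition D :: "'a vec3" where "D = (a1 - \<mu> * b1, a2 - \<mu> * b2, 0)"
definition ev :: "nat \<Rightarrow> 'a vec3" where "ev i = lin (coeff Np i) B (coeff (Pl 0) i) D"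
definition es :: "'a vec3 list" where "es = map ev [0..<Suc dg]"

lemma D_nz: "D \<noteq> (0, 0, 0)"
proof
  assume "D = (0, 0, 0)"
  hence "lin 1 A (- \<mu>) B = (0,0,0)" by (simp add: D_def lin_def vsmul_def vadd_def)
  hence "(1::'a) = 0 \<and> - \<mu> = 0" by (rule indep_0[OF indAB])
  thus False by simp
qed

lemma len_es: "length es = Suc dg" by (simp add: es_def)
lemma es_nth: "i < Suc dg \<Longrightarrow> es ! i = ev i" by (simp add: es_def del: upt_Suc)

lemma lincomb_es:
  assumes "length cs = Suc dg"
  shows "lincomb cs es = lin (\<Sum>i<Suc dg. cs ! i * coeff Np i) B (\<Sum>i<Suc dg. cs ! i * coeff (Pl 0) i) D"
proof -
  have "lincomb cs es = ((\<Sum>i<Suc dg. cs ! i * fst (ev i)), (\<Sum>i<Suc dg. cs ! i * fst (snd (ev i))),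
      (\<Sum>i<Suc dg. cs ! i * snd (snd (ev i))))"
    unfolding lincomb_def len_es by (simp add: es_nth del: sum.lessThan_Suc)
  thus ?thesis
    by (simp add: ev_def lin_def vsmul_def vadd_def D_def sum.distrib sum_distrib_left
        sum_distrib_right sum_subtractf algebra_simps del: sum.lessThan_Suc)
qed

lemma lin_BD_0: "lin x B y D = (0,0,0) \<Longrightarrow> x = 0 \<and> y = 0"
  using D_nz by (auto simp: lin_def vsmul_def vadd_def D_def)

lemma indepQ_es: "indepQ q es"
  unfolding indepQ_def
proof (intro allI impI)
  fix cs :: "'a list"
  assume h: "length cs = length es \<and> set cs \<subseteq> subf q 1 \<and> lincomb cs es = (0, 0, 0)"
  hence len: "length cs = Suc dg" by (simp add: len_es)
  define c where "c i = (if i < length cs then cs ! i else 0)" for i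
  have c: "\<forall>i. c i \<in> subf q 1" using h by (auto simp: c_def)
  have psi_eq: "psi c f = (\<Sum>i<Suc dg. cs ! i * coeff f i)" for f
    unfolding psi_def c_def len by (intro sum.cong) auto
  have "lin (psi c Np) B (psi c (Pl 0)) D = (0,0,0)"
    using h lincomb_es[OF len] by (simp only: psi_eq)
  hence "psi c Np = 0 \<and> psi c (Pl 0) = 0" by (rule lin_BD_0)
  hence "\<forall>i<Suc dg. c i = 0" using psi_zero[OF c] by blast
  thus "set cs \<subseteq> {0}" using len by (auto simp: c_def in_set_conv_nth)
qed

lemma inV_es: "\<forall>x\<in>set es. inV q x"
  using coeff_Np_subf by (auto simp: es_def ev_def inV_def lin_def vsmul_def vadd_def D_def simp del: upt_Suc)

definition Pst :: "'a \<Rightarrow> 'a \<Rightarrow> 'a" where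
  "Pst s t = (\<Sum>i<dg. s ^ (dg - 1 - i) * t ^ i * coeff (Pl 0) i)"

lemma coeff_Pl0_dg: "coeff (Pl 0) dg = 0"
  using deg_Pl[of 0] dg_prop by (intro coeff_eq_0) auto

lemma Gs: "(\<Sum>i<Suc dg. s ^ (dg - i) * t ^ i * coeff (Pl 0) i) = s * Pst s t"
proof -
  have "(\<Sum>i<Suc dg. s ^ (dg - i) * t ^ i * coeff (Pl 0) i) = (\<Sum>i<dg. s ^ (dg - i) * t ^ i * coeff (Pl 0) i)"
    by (simp add: coeff_Pl0_dg)
  also have "\<dots> = (\<Sum>i<dg. s * (s ^ (dg - 1 - i) * t ^ i * coeff (Pl 0) i))"
  proof (intro sum.cong refl)
    fix i assume "i \<in> {..<dg}"
    hence "dg - i = Suc (dg - 1 - i)" by auto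
    thus "s ^ (dg - i) * t ^ i * coeff (Pl 0) i = s * (s ^ (dg - 1 - i) * t ^ i * coeff (Pl 0) i)"
      by (simp add: mult.assoc)
  qed
  finally show ?thesis by (simp add: Pst_def sum_distrib_left)
qed

lemma coeff_Np: "coeff Np i = \<mu> * coeff (Pl 0) i + (case i of 0 \<Rightarrow> 0 | Suc j \<Rightarrow> coeff (Pl 0) j)"
  by (cases i) (simp_all add: Np_split L_def ms_0)

lemma Hs: "(\<Sum>i<Suc dg. s ^ (dg - i) * t ^ i * coeff Np i) = (s * \<mu> + t) * Pst s t"
proof -
  have "(\<Sum>i<Suc dg. s ^ (dg - i) * t ^ i * coeff Np i) =
      \<mu> * (\<Sum>i<Suc dg. s ^ (dg - i) * t ^ i * coeff (Pl 0) i) +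
      (\<Sum>i<Suc dg. s ^ (dg - i) * t ^ i * (case i of 0 \<Rightarrow> 0 | Suc j \<Rightarrow> coeff (Pl 0) j))"
    by (simp add: coeff_Np algebra_simps sum.distrib sum_distrib_left del: sum.lessThan_Suc)
  also have "(\<Sum>i<Suc dg. s ^ (dg - i) * t ^ i * (case i of 0 \<Rightarrow> 0 | Suc j \<Rightarrow> coeff (Pl 0) j))
      = (\<Sum>j<dg. s ^ (dg - Suc j) * t ^ Suc j * coeff (Pl 0) j)"
    by (subst sum.lessThan_Suc_shift) simp
  also have "\<dots> = t * Pst s t"
    by (simp add: Pst_def sum_distrib_left algebra_simps)
  also have "\<mu> * (\<Sum>i<Suc dg. s ^ (dg - i) * t ^ i * coeff (Pl 0) i) = \<mu> * (s * Pst s t)"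
    by (simp only: Gs)
  finally show ?thesis by (simp add: algebra_simps)
qed

definition csv :: "'a \<Rightarrow> 'a \<Rightarrow> 'a list" where
  "csv s t = map (\<lambda>i. s ^ (dg - i) * t ^ i) [0..<dg + 1]"

lemma len_csv: "length (csv s t) = Suc dg" by (simp add: csv_def)
lemma csv_nth: "i < Suc dg \<Longrightarrow> csv s t ! i = s ^ (dg - i) * t ^ i"
  by (simp add: csv_def del: upt_Suc)

lemma lincomb_csv: "lincomb (csv s t) es = vsmul (Pst s t) (lin s A t B)"
proof -
  have "lincomb (csv s t) es = lin ((s * \<mu> + t) * Pst s t) B (s * Pst s t) D"
    using lincomb_es[OF len_csv] Hs Gs by (simp add: csv_nth del: sum.lessThan_Suc)
  also have "\<dots> = vsmul (Pst s t) (lin s A t B)"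
    by (simp add: lin_def vsmul_def vadd_def D_def algebra_simps)
  finally show ?thesis .
qed

lemma main_pt:
  assumes st: "s \<in> subf q 1" "t \<in> subf q 1" "(s, t) \<noteq> (0, 0)"
  shows "ptS q (lincomb (csv s t) es) = phi q (ptN (lin s A t B))"
proof -
  define z where "z = s * \<mu> + t"
  have z: "z \<noteq> 0"
  proof
    assume z0: "z = 0"
    show False
    proof (cases "s = 0")
      case True thus False using z0 st by (simp add: z_def)
    next
      case False
      have "\<mu> * s = - t" using z0 by (simp add: z_def eq_neg_iff_add_eq_0 mult.commute)
      hence "\<mu> = (- t) / s" using False by (metis nonzero_mult_div_cancel_right)
      hence "\<mu> \<in> subf q 1" using st by (simp add: subf_divide subf_minus)
      thus False using mu_notin by simp
    qed
  qed
  have third: "snd (snd (lin s A t B)) = z" by (simp add: lin_third z_def)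
  have phi: "phi q (ptN (lin s A t B)) = ptS q (vsmul (1 / z) (lin s A t B))"
    using phi_ptN[of "lin s A t B"] third z by simp
  define H where "H = (\<Sum>i<Suc dg. s ^ (dg - i) * t ^ i * coeff Np i)"
  have HF: "H \<in> subf q 1" unfolding H_def using st coeff_Np_subf
    by (intro subf_sum subf_mult subf_power) auto
  have Hz: "H = z * Pst s t" using Hs by (simp add: H_def z_def)
  have lc: "lincomb (csv s t) es = vsmul H (vsmul (1 / z) (lin s A t B))"
    using lincomb_csv z by (simp add: Hz)
  have H0: "H \<noteq> 0"
  proof
    assume "H = 0"
    hence "lincomb (csv s t) es = (0,0,0)" using lc by simp
    moreover have "set (csv s t) \<subseteq> subf q 1" unfolding csv_def using st
      by (auto intro!: subf_mult subf_power simp del: upt_Suc)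
    moreover have "length (csv s t) = length es" by (simp add: len_csv len_es)
    ultimately have "set (csv s t) \<subseteq> {0}" using indepQ_es unfolding indepQ_def by blast
    moreover have "csv s t ! 0 \<in> set (csv s t)" "csv s t ! dg \<in> set (csv s t)"
      by (simp_all add: len_csv)
    ultimately have "s ^ dg = 0" "t ^ dg = 0" by (auto simp: csv_nth)
    thus False using st by simp
  qed
  show ?thesis unfolding lc phi by (rule ptS_scale[OF HF H0])
qed

lemma nrc_eq:
  "nrc q dg es = {phi q (ptN (lin s A t B)) | s t. s \<in> subf q 1 \<and> t \<in> subf q 1 \<and> (s, t) \<noteq> (0, 0)}"
proof -
  have "nrc q dg es = {ptS q (lincomb (csv s t) es) | s t. s \<in> subf q 1 \<and> t \<in> subf q 1 \<and> (s, t) \<noteq> (0, 0)}"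
    unfolding nrc_def csv_def by (rule refl)
  also have "\<dots> = {phi q (ptN (lin s A t B)) | s t. s \<in> subf q 1 \<and> t \<in> subf q 1 \<and> (s, t) \<noteq> (0, 0)}"
  proof (rule Set.set_eqI, rule iffI)
    fix x assume "x \<in> {ptS q (lincomb (csv s t) es) | s t. s \<in> subf q 1 \<and> t \<in> subf q 1 \<and> (s, t) \<noteq> (0, 0)}"
    then obtain s t where "x = ptS q (lincomb (csv s t) es)" "s \<in> subf q 1" "t \<in> subf q 1" "(s, t) \<noteq> (0, 0)"
      by blast
    hence "x = phi q (ptN (lin s A t B)) \<and> s \<in> subf q 1 \<and> t \<in> subf q 1 \<and> (s, t) \<noteq> (0, 0)"
      using main_pt by simp
    thus "x \<in> {phi q (ptN (lin s A t B)) | s t. s \<in> subf q 1 \<and> t \<in> subf q 1 \<and> (s, t) \<noteq> (0, 0)}"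
      by blast
  next
    fix x assume "x \<in> {phi q (ptN (lin s A t B)) | s t. s \<in> subf q 1 \<and> t \<in> subf q 1 \<and> (s, t) \<noteq> (0, 0)}"
    then obtain s t where "x = phi q (ptN (lin s A t B))" "s \<in> subf q 1" "t \<in> subf q 1" "(s, t) \<noteq> (0, 0)"
      by blast
    hence "x = ptS q (lincomb (csv s t) es) \<and> s \<in> subf q 1 \<and> t \<in> subf q 1 \<and> (s, t) \<noteq> (0, 0)"
      using main_pt by simp
    thus "x \<in> {ptS q (lincomb (csv s t) es) | s t. s \<in> subf q 1 \<and> t \<in> subf q 1 \<and> (s, t) \<noteq> (0, 0)}"
      by blast
  qed
  finally show ?thesis .
qed

end


lemma lincomb_add3:
  assumes "length xs = length ws" "length ys = length ws" "length zs = length ws"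
  shows "lincomb (map (\<lambda>i. a * xs ! i + b * ys ! i + c * zs ! i) [0..<length ws]) ws =
    vadd (vsmul a (lincomb xs ws)) (vadd (vsmul b (lincomb ys ws)) (vsmul c (lincomb zs ws)))"
  using assms unfolding lincomb_def vadd_def vsmul_def
  by (simp add: sum.distrib sum_distrib_left sum_distrib_right algebra_simps)

context nrcv
begin

lemma csv10: "i < Suc dg \<Longrightarrow> csv 1 0 ! i = (if i = 0 then 1 else 0)"
  by (simp add: csv_nth)
lemma csv01: "i < Suc dg \<Longrightarrow> csv 0 1 ! i = (if i = dg then 1 else 0)"
  by (simp add: csv_nth)
lemma csv11: "i < Suc dg \<Longrightarrow> csv 1 1 ! i = 1"
  by (simp add: csv_nth)

lemma no3:
  assumes g: "g1 \<in> subf q 1" "g2 \<in> subf q 1" "g3 \<in> subf q 1"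
    and z: "vadd (vsmul g1 (lincomb (csv 1 0) es)) (vadd (vsmul g2 (lincomb (csv 0 1) es))
        (vsmul g3 (lincomb (csv 1 1) es))) = (0,0,0)"
  shows "g1 = 0 \<and> g2 = 0 \<and> g3 = 0"
proof -
  define cs where "cs = map (\<lambda>i. g1 * csv 1 0 ! i + g2 * csv 0 1 ! i + g3 * csv 1 1 ! i) [0..<length es]"
  have "lincomb cs es = (0,0,0)" unfolding cs_def
    by (subst lincomb_add3) (simp_all add: len_csv len_es z)
  moreover have "length cs = length es" by (simp add: cs_def)
  moreover have "set cs \<subseteq> subf q 1"
    unfolding cs_def len_es using g
    by (auto simp: csv10 csv01 csv11 intro!: subf_add subf_mult simp del: upt_Suc)
  ultimately have "set cs \<subseteq> {0}" using indepQ_es unfolding indepQ_def by blast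
  hence cs0: "cs ! i = 0" if "i < Suc dg" for i
  proof -
    have "cs ! i \<in> set cs" using that by (simp add: cs_def len_es del: upt_Suc)
    thus ?thesis using \<open>set cs \<subseteq> {0}\<close> by auto
  qed
  have "cs ! 1 = g3" using dg2 by (simp add: cs_def len_es csv10 csv01 csv11 del: upt_Suc)
  moreover have "cs ! 0 = g1 + g3" using dg2 by (simp add: cs_def len_es csv10 csv01 csv11 del: upt_Suc)
  moreover have "cs ! dg = g2 + g3" using dg2 by (simp add: cs_def len_es csv10 csv01 csv11 del: upt_Suc)
  ultimately show ?thesis using cs0[of 1] cs0[of 0] cs0[of dg] dg2 by auto
qed

end

context ff
begin

lemma nrc_wrap:
  fixes A B :: "'a vec3"
  assumes ind: "indepN A B"
    and ext: "\<forall>s t. s \<in> subf q 1 \<longrightarrow> t \<in> subf q 1 \<longrightarrow> (s, t) \<noteq> (0, 0) \<longrightarrow> snd (snd (lin s A t B)) \<noteq> 0"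
  shows "\<exists>d es w1 w2 w3. 2 \<le> d \<and> d \<le> n \<and> length es = d + 1 \<and> (\<forall>e\<in>set es. inV q e) \<and> indepQ q es \<and>
    nrc q d es = {phi q (ptN (lin s A t B)) | s t. s \<in> subf q 1 \<and> t \<in> subf q 1 \<and> (s, t) \<noteq> (0, 0)} \<and>
    phi q (ptN A) = ptS q w1 \<and> phi q (ptN B) = ptS q w2 \<and> phi q (ptN (lin 1 A 1 B)) = ptS q w3 \<and>
    (\<forall>g1 g2 g3. g1 \<in> subf q 1 \<longrightarrow> g2 \<in> subf q 1 \<longrightarrow> g3 \<in> subf q 1 \<longrightarrow>
       vadd (vsmul g1 w1) (vadd (vsmul g2 w2) (vsmul g3 w3)) = (0,0,0) \<longrightarrow> g1 = 0 \<and> g2 = 0 \<and> g3 = 0)"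
proof -
  obtain a1 a2 \<alpha> where A: "A = (a1, a2, \<alpha>)" by (cases A) auto
  obtain b1 b2 \<beta> where B: "B = (b1, b2, \<beta>)" by (cases B) auto
  have \<beta>: "\<beta> \<noteq> 0" using ext[rule_format, of 0 1] by (simp add: B)
  define \<mu> where "\<mu> = \<alpha> / \<beta>"
  have mu: "\<mu> \<notin> subf q 1"
  proof
    assume "\<mu> \<in> subf q 1"
    hence "snd (snd (lin 1 A (- \<mu>) B)) \<noteq> 0" using ext[rule_format, of 1 "- \<mu>"] by (simp add: subf_minus)
    thus False using \<beta> by (simp add: lin_third A B \<mu>_def)
  qed
  define A' where "A' = (a1 / \<beta>, a2 / \<beta>, \<mu>)"
  define B' where "B' = (b1 / \<beta>, b2 / \<beta>, 1::'a)"
  have sc: "lin s A' t B' = vsmul (1 / \<beta>) (lin s A t B)" for s t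
    using \<beta> by (simp add: A'_def B'_def A B \<mu>_def lin_def vsmul_def vadd_def field_simps)
  have ptNeq: "ptN (lin s A' t B') = ptN (lin s A t B)" for s t
    unfolding sc by (rule ptN_scale) (use \<beta> in simp)
  have ind': "indepN A' B'" unfolding indepN_lin
  proof (intro allI impI)
    fix x y assume "lin x A' y B' = (0,0,0)"
    hence "lin x A y B = (0,0,0)" using sc[of x y] \<beta> by (simp add: vsmul_eq_0)
    thus "x = 0 \<and> y = 0" using indep_0[OF ind] by blast
  qed
  interpret N: nrcv q n p e T \<mu> "a1 / \<beta>" "a2 / \<beta>" "b1 / \<beta>" "b2 / \<beta>"
    by unfold_locales (use mu ind' in \<open>simp_all add: A'_def B'_def\<close>)
  have A'eq: "A' = lin 1 A' 0 B'" "B' = lin 0 A' 1 B'" by simp_all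
  show ?thesis
  proof (intro exI conjI)
    show "2 \<le> N.dg" by (rule N.dg2)
    show "N.dg \<le> n" by (rule N.dg_le)
    show "length N.es = N.dg + 1" by (simp add: N.len_es)
    show "\<forall>e\<in>set N.es. inV q e" by (rule N.inV_es)
    show "indepQ q N.es" by (rule N.indepQ_es)
    show "nrc q N.dg N.es = {phi q (ptN (lin s A t B)) | s t. s \<in> subf q 1 \<and> t \<in> subf q 1 \<and> (s, t) \<noteq> (0, 0)}"
      unfolding N.nrc_eq using ptNeq A'_def B'_def by simp
    show "phi q (ptN A) = ptS q (lincomb (N.csv 1 0) N.es)"
      using N.main_pt[of 1 0] ptNeq[of 1 0] by (simp add: A'_def B'_def)
    show "phi q (ptN B) = ptS q (lincomb (N.csv 0 1) N.es)"
      using N.main_pt[of 0 1] ptNeq[of 0 1] by (simp add: A'_def B'_def)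
    show "phi q (ptN (lin 1 A 1 B)) = ptS q (lincomb (N.csv 1 1) N.es)"
      using N.main_pt[of 1 1] ptNeq[of 1 1] by (simp add: A'_def B'_def)
    show "\<forall>g1 g2 g3. g1 \<in> subf q 1 \<longrightarrow> g2 \<in> subf q 1 \<longrightarrow> g3 \<in> subf q 1 \<longrightarrow>
       vadd (vsmul g1 (lincomb (N.csv 1 0) N.es)) (vadd (vsmul g2 (lincomb (N.csv 0 1) N.es))
        (vsmul g3 (lincomb (N.csv 1 1) N.es))) = (0,0,0) \<longrightarrow> g1 = 0 \<and> g2 = 0 \<and> g3 = 0"
      using N.no3 by blast
  qed
qed

end


lemma lincomb2: "lincomb [a, b] [u, v] = lin a u b v"
  by (simp add: lincomb_def lin_def vadd_def vsmul_def numeral_2_eq_2 lessThan_Suc)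

lemma lincomb_Cons: "length cs = length ws \<Longrightarrow>
  lincomb (c # cs) (w # ws) = vadd (vsmul c w) (lincomb cs ws)"
  by (simp add: lincomb_def vadd_def vsmul_def sum.lessThan_Suc_shift del: sum.lessThan_Suc)

context ff
begin

lemma lin3: "vadd (vsmul g1 (lin a1 u b1 v)) (vadd (vsmul g2 (lin a2 u b2 v)) (vsmul g3 (lin a3 u b3 v)))
  = lin (g1 * a1 + g2 * a2 + g3 * a3) u (g1 * b1 + g2 * b2 + g3 * b3) (v::'a vec3)"
  by (simp add: lin_def vadd_def vsmul_def distrib_left distrib_right mult.assoc add.assoc add.left_commute)

lemma in_span2:
  assumes "ptS q (w::'a vec3) \<in> proj_span q [u, v]"
  shows "\<exists>a b. a \<in> subf q 1 \<and> b \<in> subf q 1 \<and> w = lin a u b v"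
proof -
  obtain w' where w': "ptS q w = ptS q w'" "w' \<in> spanQ q [u, v]"
    using assms unfolding proj_span_def by auto
  then obtain cs where cs: "w' = lincomb cs [u, v]" "length cs = 2" "set cs \<subseteq> subf q 1"
    unfolding spanQ_def by auto
  then obtain a b where ab: "cs = [a, b]"
  proof -
    have "cs = [cs ! 0, cs ! 1]" using cs(2)
      by (intro nth_equalityI) (auto simp: less_2_cases_iff)
    thus ?thesis using that by blast
  qed
  have abF: "a \<in> subf q 1" "b \<in> subf q 1" using cs ab by auto
  obtain c where c: "c \<in> subf q 1" "w = vsmul c w'" using ptS_eq[OF w'(1)[symmetric]] by blast
  have "w = lin (c * a) u (c * b) v" using c cs ab by (simp add: lincomb2 vsmul_lin)
  thus ?thesis using c abF by (blast intro: subf_mult)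
qed

lemma not_col:
  fixes w1 w2 w3 :: "'a vec3"
  assumes ind: "\<forall>g1 g2 g3. g1 \<in> subf q 1 \<longrightarrow> g2 \<in> subf q 1 \<longrightarrow> g3 \<in> subf q 1 \<longrightarrow>
       vadd (vsmul g1 w1) (vadd (vsmul g2 w2) (vsmul g3 w3)) = (0,0,0) \<longrightarrow> g1 = 0 \<and> g2 = 0 \<and> g3 = 0"
  shows "\<not> collinear3 q (ptS q w1) (ptS q w2) (ptS q w3)"
proof
  assume "collinear3 q (ptS q w1) (ptS q w2) (ptS q w3)"
  then obtain u v where uv: "{ptS q w1, ptS q w2, ptS q w3} \<subseteq> proj_span q [u, v]"
    unfolding collinear3_def by blast
  have "ptS q w1 \<in> proj_span q [u, v]" using uv by simp
  from in_span2[OF this] obtain a1 b1 where 1: "a1 \<in> subf q 1" "b1 \<in> subf q 1" "w1 = lin a1 u b1 v"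
    by blast
  have "ptS q w2 \<in> proj_span q [u, v]" using uv by simp
  from in_span2[OF this] obtain a2 b2 where 2: "a2 \<in> subf q 1" "b2 \<in> subf q 1" "w2 = lin a2 u b2 v"
    by blast
  have "ptS q w3 \<in> proj_span q [u, v]" using uv by simp
  from in_span2[OF this] obtain a3 b3 where 3: "a3 \<in> subf q 1" "b3 \<in> subf q 1" "w3 = lin a3 u b3 v"
    by blast
  have w1nz: "w1 \<noteq> (0,0,0)"
  proof
    assume "w1 = (0,0,0)"
    hence "vadd (vsmul 1 w1) (vadd (vsmul 0 w2) (vsmul 0 w3)) = (0,0,0)"
      by (simp add: vadd_def vsmul_def)
    hence "(1::'a) = 0 \<and> (0::'a) = 0 \<and> (0::'a) = 0"
      by (intro ind[rule_format]) simp_all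
    thus False by simp
  qed
  hence ab1: "(a1, b1) \<noteq> (0, 0)" using 1 by auto
  obtain u1 u2 u3 where u: "u = (u1, u2, u3)" by (cases u) auto
  obtain v1 v2 v3 where v: "v = (v1, v2, v3)" by (cases v) auto
  define g1 where "g1 = a2 * b3 - a3 * b2"
  define g2 where "g2 = a3 * b1 - a1 * b3"
  define g3 where "g3 = a1 * b2 - a2 * b1"
  have gF: "g1 \<in> subf q 1" "g2 \<in> subf q 1" "g3 \<in> subf q 1"
    unfolding g1_def g2_def g3_def using 1 2 3 by (auto intro!: subf_diff subf_mult)
  have sa: "g1 * a1 + g2 * a2 + g3 * a3 = 0" by (simp add: g1_def g2_def g3_def algebra_simps)
  have sb: "g1 * b1 + g2 * b2 + g3 * b3 = 0" by (simp add: g1_def g2_def g3_def algebra_simps)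
  have "vadd (vsmul g1 w1) (vadd (vsmul g2 w2) (vsmul g3 w3)) = (0,0,0)"
    unfolding 1(3) 2(3) 3(3) lin3 sa sb by (simp add: lin_def vadd_def)
  hence "g1 = 0 \<and> g2 = 0 \<and> g3 = 0" by (intro ind[rule_format] gF)
  hence g0: "g1 = 0" "g2 = 0" "g3 = 0" by simp_all
  obtain c where c: "c \<in> subf q 1" "a2 = c * a1" "b2 = c * b1"
  proof (cases "a1 = 0")
    case True
    hence "b1 \<noteq> 0" using ab1 by simp
    moreover have "a2 * b1 = 0" using g0(3) True by (simp add: g3_def)
    ultimately have "a2 = 0" by simp
    show ?thesis
    proof (rule that[of "b2 / b1"])
      show "b2 / b1 \<in> subf q 1" using 1 2 by (simp add: subf_divide)
      show "a2 = b2 / b1 * a1" using True \<open>a2 = 0\<close> by simp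
      show "b2 = b2 / b1 * b1" using \<open>b1 \<noteq> 0\<close> by simp
    qed
  next
    case False
    have "a1 * b2 = a2 * b1" using g0(3) by (simp add: g3_def)
    hence "b2 = (a2 / a1) * b1" using False by (simp add: field_simps)
    show ?thesis
    proof (rule that[of "a2 / a1"])
      show "a2 / a1 \<in> subf q 1" using 1 2 by (simp add: subf_divide)
      show "a2 = a2 / a1 * a1" using False by simp
      show "b2 = a2 / a1 * b1" by fact
    qed
  qed
  have "w2 = vsmul c w1" using c 1 2 by (simp add: vsmul_lin)
  hence zz: "vadd (vsmul c w1) (vadd (vsmul (-1) w2) (vsmul 0 w3)) = (0,0,0)"
    by (simp add: vadd_def vsmul_def)
  have "c = 0 \<and> (-1::'a) = 0 \<and> (0::'a) = 0"
  proof (rule ind[rule_format])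
    show "c \<in> subf q 1" by (rule c(1))
    show "(-1::'a) \<in> subf q 1" by (rule subf_minus) simp
    show "(0::'a) \<in> subf q 1" by simp
  qed (rule zz)
  thus False by simp
qed

lemma geom: "(\<Sum>j<r. q ^ j) < q ^ r"
proof (induction r)
  case 0 thus ?case by simp
next
  case (Suc r)
  have "(\<Sum>j<Suc r. q ^ j) = (\<Sum>j<r. q ^ j) + q ^ r" by simp
  also have "\<dots> < q ^ r + q ^ r" using Suc by simp
  also have "\<dots> \<le> q * q ^ r" using q_ge2 by (simp add: mult_2[symmetric])
  finally show ?case by simp
qed

lemma exact_elem:
  assumes r: "r dvd n"
  shows "\<exists>\<eta>. \<eta> \<in> subf q r \<and> (\<forall>j. 1 \<le> j \<longrightarrow> j < r \<longrightarrow> (\<eta>::'a) ^ (q ^ j) \<noteq> \<eta>)"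
proof -
  let ?Bad = "\<Union>j\<in>{1..<r}. (subf q j :: 'a set)"
  have "card ?Bad \<le> (\<Sum>j\<in>{1..<r}. card (subf q j :: 'a set))" by (rule card_UN_le) simp
  also have "\<dots> \<le> (\<Sum>j\<in>{1..<r}. q ^ j)" by (intro sum_mono card_subf_le) auto
  also have "\<dots> \<le> (\<Sum>j<r. q ^ j)" by (intro sum_mono2) auto
  also have "\<dots> < q ^ r" by (rule geom)
  finally have "card ?Bad < card (subf q r :: 'a set)" using card_subf[OF r] by simp
  hence "\<not> subf q r \<subseteq> ?Bad"
  proof (intro notI)
    assume "subf q r \<subseteq> ?Bad"
    hence "card (subf q r :: 'a set) \<le> card ?Bad" by (intro card_mono) simp_all
    thus False using \<open>card ?Bad < card (subf q r :: 'a set)\<close> by simp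
  qed
  then obtain \<eta> where "\<eta> \<in> subf q r" "\<eta> \<notin> ?Bad" by blast
  thus ?thesis by (intro exI[of _ \<eta>]) (auto simp: subf_iff)
qed

lemma conj_inj:
  assumes ex: "\<forall>j. 1 \<le> j \<longrightarrow> j < r \<longrightarrow> (\<eta>::'a) ^ (q ^ j) \<noteq> \<eta>"
    and ab: "a < r" "b < r" "\<eta> ^ (q ^ a) = \<eta> ^ (q ^ b)"
  shows "a = b"
proof (rule ccontr)
  assume ne: "a \<noteq> b"
  have *: False if "x < y" "y < r" "\<eta> ^ (q ^ x) = \<eta> ^ (q ^ y)" for x y
  proof -
    have "\<eta> ^ (q ^ y) = (\<eta> ^ (q ^ (y - x))) ^ (q ^ x)" using frob_comp[of \<eta> "y - x" x] that(1)
      by simp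
    hence "(\<eta> ^ (q ^ (y - x))) ^ (q ^ x) = \<eta> ^ (q ^ x)" using that by simp
    hence "\<eta> ^ (q ^ (y - x)) = \<eta>" by (rule frob_inj)
    thus False using ex that by auto
  qed
  show False using ne ab * by (metis linorder_neqE_nat)
qed

definition lam :: "'a \<Rightarrow> 'a list \<Rightarrow> 'a" where
  "lam \<eta> cs = (\<Sum>i<length cs. cs ! i * \<eta> ^ i)"

lemma basis_indep:
  assumes ex: "\<forall>j. 1 \<le> j \<longrightarrow> j < r \<longrightarrow> (\<eta>::'a) ^ (q ^ j) \<noteq> \<eta>"
    and cs: "length cs = r" "set cs \<subseteq> subf q 1" "lam \<eta> cs = 0"
  shows "set cs \<subseteq> {0}"
proof (rule ccontr)
  assume nz: "\<not> set cs \<subseteq> {0}"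
  define g :: "'a poly" where "g = (\<Sum>i<r. monom (cs ! i) i)"
  have cg: "coeff g i = (if i < r then cs ! i else 0)" for i
    by (simp add: g_def coeff_sum coeff_monom)
  have g0: "g \<noteq> 0"
  proof
    assume "g = 0"
    have "\<forall>i<r. cs ! i = 0"
    proof (intro allI impI)
      fix i assume "i < r"
      have "coeff g i = 0" using \<open>g = 0\<close> by simp
      thus "cs ! i = 0" using cg[of i] \<open>i < r\<close> by simp
    qed
    thus False using nz cs(1) by (auto simp: in_set_conv_nth)
  qed
  have r0: "r \<ge> 1" using nz cs(1) by (cases r) auto
  have dg: "degree g < r"
  proof -
    have "degree g \<le> r - 1" unfolding g_def
    proof (rule degree_sum_le)
      fix i assume "i \<in> {..<r}"
      hence "i \<le> r - 1" by simp
      thus "degree (monom (cs ! i) i) \<le> r - 1" using degree_monom_le[of "cs ! i" i] by linarith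
    qed simp
    thus ?thesis using r0 by simp
  qed
  have roots: "poly g (\<eta> ^ (q ^ j)) = 0" for j
  proof -
    have "poly g (\<eta> ^ (q ^ j)) = (\<Sum>i<r. cs ! i * (\<eta> ^ (q ^ j)) ^ i)"
      by (simp add: g_def poly_sum poly_monom)
    also have "\<dots> = (\<Sum>i<r. (cs ! i * \<eta> ^ i) ^ (q ^ j))"
    proof (intro sum.cong refl)
      fix i assume "i \<in> {..<r}"
      hence "cs ! i \<in> set cs" using cs(1) by simp
      hence "cs ! i \<in> subf q 1" using cs(2) by blast
      hence "cs ! i \<in> subf q j" by (rule subf1_sub)
      thus "cs ! i * (\<eta> ^ (q ^ j)) ^ i = (cs ! i * \<eta> ^ i) ^ (q ^ j)"
        by (simp add: power_mult_distrib subf_iff flip: power_mult) (simp add: mult.commute)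
    qed
    also have "\<dots> = (lam \<eta> cs) ^ (q ^ j)" unfolding lam_def cs(1) by (rule frob_sum[symmetric])
    finally show ?thesis using cs(3) q_pos by simp
  qed
  have "(\<lambda>j. \<eta> ^ (q ^ j)) ` {..<r} \<subseteq> {x. poly g x = 0}" using roots by auto
  moreover have "card ((\<lambda>j. \<eta> ^ (q ^ j)) ` {..<r}) = r"
    using conj_inj[OF ex] by (subst card_image) (auto intro: inj_onI)
  ultimately have "card ((\<lambda>j. \<eta> ^ (q ^ j)) ` {..<r}) \<le> card {x. poly g x = 0}"
    by (intro card_mono) simp_all
  hence "r \<le> card {x. poly g x = 0}" using \<open>card ((\<lambda>j. \<eta> ^ (q ^ j)) ` {..<r}) = r\<close> by simp
  also have "\<dots> \<le> degree g" by (rule card_poly_roots_bound[OF g0])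
  finally show False using dg by simp
qed

lemma basis_span:
  assumes r: "r dvd n" and \<eta>: "\<eta> \<in> subf q r" and ex: "\<forall>j. 1 \<le> j \<longrightarrow> j < r \<longrightarrow> (\<eta>::'a) ^ (q ^ j) \<noteq> \<eta>"
  shows "lam \<eta> ` {cs. set cs \<subseteq> subf q 1 \<and> length cs = r} = subf q r"
proof -
  let ?C = "{cs. set cs \<subseteq> (subf q 1 :: 'a set) \<and> length cs = r}"
  have sub: "lam \<eta> ` ?C \<subseteq> subf q r"
  proof
    fix x assume "x \<in> lam \<eta> ` ?C"
    then obtain cs where cs: "cs \<in> ?C" "x = lam \<eta> cs" by blast
    have "cs ! i \<in> subf q r" if "i < length cs" for i
    proof -
      have "cs ! i \<in> set cs" using that by (rule nth_mem)
      hence "cs ! i \<in> subf q 1" using cs(1) by blast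
      thus ?thesis by (rule subf1_sub)
    qed
    thus "x \<in> subf q r" unfolding cs(2) lam_def using \<eta>
      by (intro subf_sum subf_mult subf_power) auto
  qed
  have inj: "inj_on (lam \<eta>) ?C"
  proof (rule inj_onI)
    fix xs ys assume xs: "xs \<in> ?C" and ys: "ys \<in> ?C" and eq: "lam \<eta> xs = lam \<eta> ys"
    define d where "d = map (\<lambda>i. xs ! i - ys ! i) [0..<r]"
    have ld: "length d = r" by (simp add: d_def)
    have "lam \<eta> d = (\<Sum>i<r. (xs ! i - ys ! i) * \<eta> ^ i)"
      unfolding lam_def ld by (intro sum.cong refl) (simp add: d_def)
    also have "\<dots> = lam \<eta> xs - lam \<eta> ys" using xs ys
      by (simp add: lam_def left_diff_distrib sum_subtractf)
    finally have "lam \<eta> d = 0" using eq by simp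
    moreover have "set d \<subseteq> subf q 1"
    proof
      fix x assume "x \<in> set d"
      then obtain i where "i < r" "x = xs ! i - ys ! i" by (auto simp: d_def)
      moreover have "xs ! i \<in> subf q 1" "ys ! i \<in> subf q 1"
        using xs ys \<open>i < r\<close> nth_mem[of i xs] nth_mem[of i ys] by auto
      ultimately show "x \<in> subf q 1" by (simp add: subf_diff)
    qed
    ultimately have "set d \<subseteq> {0}" using basis_indep[OF ex ld] by simp
    hence "\<forall>i<r. xs ! i = ys ! i" unfolding d_def by (auto simp: image_subset_iff)
    thus "xs = ys" using xs ys by (intro nth_equalityI) auto
  qed
  have cC: "card ?C = q ^ r"
  proof -
    have "card ?C = card (subf q 1 :: 'a set) ^ r"
      using card_lists_length_eq[of "subf q 1 :: 'a set" r] by simp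
    thus ?thesis using card_subf[of 1] by simp
  qed
  have "card (lam \<eta> ` ?C) = q ^ r" using card_image[OF inj] cC by simp
  hence "card (lam \<eta> ` ?C) = card (subf q r :: 'a set)" using card_subf[OF r] by simp
  thus ?thesis using sub by (intro card_subset_eq) simp_all
qed

end


lemma pt_aff:
  assumes "w \<noteq> (0,0,0)" "\<not> on_linf (ptN w)"
  shows "snd (snd w) \<noteq> 0"
proof
  assume h: "snd (snd w) = 0"
  obtain w1 w2 w3 where w: "w = (w1, w2, w3)" by (cases w) auto
  have "(w1, w2) \<noteq> (0, 0)" using assms(1) h w by auto
  hence "on_linf (ptN w)" unfolding on_linf_def using h w by auto
  thus False using assms(2) by simp
qed

context ff
begin

lemma lincomb_tail:
  assumes "length cs = r"
  shows "lincomb cs (map (\<lambda>i. (\<eta> ^ i * d1, \<eta> ^ i * d2, 0)) [0..<r]) = (lam \<eta> cs * d1, lam \<eta> cs * d2, (0::'a))"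
  using assms unfolding lincomb_def lam_def by (simp add: sum_distrib_right mult.assoc)

lemma subspace_part:
  assumes r: "r dvd n" and D: "(d1, d2) \<noteq> ((0::'a), (0::'a))"
  shows "\<exists>S. subspace_dim q r S \<and> {ptS q (a + lm * d1, b + lm * d2, 1) | lm. lm \<in> subf q r} \<subseteq> S
    \<and> D_elem q r (S \<inter> H_inf_points q)"
proof -
  obtain \<eta> where \<eta>: "\<eta> \<in> subf q r" and ex: "\<forall>j. 1 \<le> j \<longrightarrow> j < r \<longrightarrow> (\<eta>::'a) ^ (q ^ j) \<noteq> \<eta>"
    using exact_elem[OF r] by blast
  define tl where "tl = map (\<lambda>i. (\<eta> ^ i * d1, \<eta> ^ i * d2, 0::'a)) [0..<r]"
  define ws where "ws = (a, b, 1) # tl"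
  have ltl: "length tl = r" by (simp add: tl_def)
  have lcw: "lincomb (c # cs) ws = (c * a + lam \<eta> cs * d1, c * b + lam \<eta> cs * d2, c)"
    if "length cs = r" for c cs
    using that lincomb_Cons[of cs tl c "(a, b, 1)"] lincomb_tail[OF that, of \<eta> d1 d2] ltl
    by (simp add: ws_def tl_def vadd_def vsmul_def)
  have lamD: "x * d1 = 0 \<Longrightarrow> x * d2 = 0 \<Longrightarrow> x = 0" for x using D by auto
  have span_cons: "\<exists>c cs. xs = c # cs \<and> length cs = r" if "length xs = Suc r" for xs :: "'a list"
    using that by (cases xs) auto
  define S where "S = proj_span q ws"
  have dimS: "subspace_dim q r S"
    unfolding subspace_dim_def
  proof (intro exI conjI)
    show "length ws = r + 1" by (simp add: ws_def ltl)
    show "\<forall>w\<in>set ws. inV q w" by (auto simp: ws_def tl_def inV_def)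
    show "S = proj_span q ws" by (simp add: S_def)
    show "indepQ q ws" unfolding indepQ_def
    proof (intro allI impI)
      fix xs :: "'a list" assume h: "length xs = length ws \<and> set xs \<subseteq> subf q 1 \<and> lincomb xs ws = (0, 0, 0)"
      have "length xs = Suc r" using h by (simp add: ws_def ltl)
      then obtain c cs where xs: "xs = c # cs" "length cs = r" using span_cons by blast
      have "lincomb (c # cs) ws = (0,0,0)" using h xs(1) by simp
      hence eqs: "(c * a + lam \<eta> cs * d1, c * b + lam \<eta> cs * d2, c) = (0,0,0)"
        using lcw[OF xs(2), of c] by metis
      hence c0: "c = 0" by simp
      have l0: "lam \<eta> cs * d1 = 0" "lam \<eta> cs * d2 = 0" using eqs unfolding c0 by simp_all
      hence "lam \<eta> cs = 0" using lamD by blast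
      hence "set cs \<subseteq> {0}" using basis_indep[OF ex xs(2)] h xs(1) by simp
      thus "set xs \<subseteq> {0}" using c0 xs(1) by simp
    qed
  qed
  have spanK: "\<exists>cs. set cs \<subseteq> subf q 1 \<and> length cs = r \<and> x = lam \<eta> cs" if "x \<in> subf q r" for x
  proof -
    have "x \<in> lam \<eta> ` {cs. set cs \<subseteq> (subf q 1 :: 'a set) \<and> length cs = r}"
      using basis_span[OF r \<eta> ex] that by simp
    then obtain cs where "cs \<in> {cs. set cs \<subseteq> (subf q 1 :: 'a set) \<and> length cs = r}" "x = lam \<eta> cs"
      by (rule imageE)
    thus ?thesis by blast
  qed
  have inS: "ptS q (c * a + x * d1, c * b + x * d2, c) \<in> S"
    if hx: "x \<in> subf q r" "c \<in> subf q 1" "(c * a + x * d1, c * b + x * d2, c) \<noteq> (0,0,0)" for x c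
  proof -
    obtain cs where cs: "set cs \<subseteq> subf q 1" "length cs = r" "x = lam \<eta> cs" using spanK[OF hx(1)] by blast
    have "(c * a + x * d1, c * b + x * d2, c) = lincomb (c # cs) ws" using lcw[OF cs(2)] cs(3) by simp
    moreover have "lincomb (c # cs) ws \<in> spanQ q ws" unfolding spanQ_def
    proof (intro CollectI exI conjI)
      show "lincomb (c # cs) ws = lincomb (c # cs) ws" by (rule refl)
      show "length (c # cs) = length ws" using cs(2) by (simp add: ws_def ltl)
      show "set (c # cs) \<subseteq> subf q 1" using cs(1) hx(2) by simp
    qed
    ultimately show ?thesis unfolding S_def proj_span_def using hx(3)
      by (intro CollectI exI[of _ "lincomb (c # cs) ws"]) simp
  qed
  have sub: "{ptS q (a + lm * d1, b + lm * d2, 1) | lm. lm \<in> subf q r} \<subseteq> S"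
  proof
    fix P assume "P \<in> {ptS q (a + lm * d1, b + lm * d2, 1) | lm. lm \<in> subf q r}"
    then obtain lm where l: "lm \<in> subf q r" "P = ptS q (a + lm * d1, b + lm * d2, 1)" by blast
    show "P \<in> S" using inS[OF l(1), of 1] l(2) by simp
  qed
  have Delem: "S \<inter> H_inf_points q = {ptS q (d1 * x, d2 * x, 0) | x. x \<in> subf q r \<and> x \<noteq> 0}"
  proof (rule Set.set_eqI, rule iffI)
    fix P assume P: "P \<in> S \<inter> H_inf_points q"
    then obtain w where w: "P = ptS q w" "w \<in> spanQ q ws" "w \<noteq> (0,0,0)"
      unfolding S_def proj_span_def by blast
    obtain a' b' where ab': "P = ptS q (a', b', 0)" using P unfolding H_inf_points_def by blast
    have "ptS q w = ptS q (a', b', 0)" using w(1) ab' by simp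
    then obtain c' where c': "c' \<noteq> 0" "(a', b', 0) = vsmul c' w" using ptS_eq by blast
    hence "c' * snd (snd w) = 0" by (simp add: vsmul_def)
    hence w3: "snd (snd w) = 0" using c'(1) by simp
    obtain xs where xs: "w = lincomb xs ws" "length xs = length ws" "set xs \<subseteq> subf q 1"
      using w(2) unfolding spanQ_def by blast
    have "length xs = Suc r" using xs(2) by (simp add: ws_def ltl)
    then obtain c cs where cs: "xs = c # cs" "length cs = r" using span_cons by blast
    have wf: "w = (c * a + lam \<eta> cs * d1, c * b + lam \<eta> cs * d2, c)" using lcw[OF cs(2)] xs(1) cs(1) by simp
    hence c0: "c = 0" using w3 by simp
    have lK: "lam \<eta> cs \<in> subf q r"
      using basis_span[OF r \<eta> ex] cs xs(3) by auto
    have "lam \<eta> cs \<noteq> 0" using w(3) wf c0 by auto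
    moreover have "P = ptS q (d1 * lam \<eta> cs, d2 * lam \<eta> cs, 0)" using w(1) wf c0 by (simp add: mult.commute)
    ultimately show "P \<in> {ptS q (d1 * x, d2 * x, 0) | x. x \<in> subf q r \<and> x \<noteq> 0}" using lK by blast
  next
    fix P assume "P \<in> {ptS q (d1 * x, d2 * x, 0) | x. x \<in> subf q r \<and> x \<noteq> 0}"
    then obtain x where x: "x \<in> subf q r" "x \<noteq> 0" "P = ptS q (d1 * x, d2 * x, 0)" by blast
    have nz: "(0 * a + x * d1, 0 * b + x * d2, 0::'a) \<noteq> (0,0,0)" using x(2) D by auto
    have "P \<in> S" using inS[OF x(1), of 0] nz x(3) by (simp add: mult.commute)
    moreover have nz': "(d1 * x, d2 * x, 0::'a) \<noteq> (0,0,0)" using x(2) D by auto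
    moreover have "P \<in> Sigma_points q" unfolding Sigma_points_def using x(3) nz'
      by (intro CollectI exI[of _ "(d1 * x, d2 * x, 0)"]) (simp add: inV_def)
    moreover have "(d1 * x, d2 * x) \<noteq> (0, 0)" using nz by (auto simp: mult.commute)
    ultimately show "P \<in> S \<inter> H_inf_points q" unfolding H_inf_points_def using x(3) by blast
  qed
  have "D_elem q r (S \<inter> H_inf_points q)" unfolding D_elem_def Delem using D by blast
  thus ?thesis using dimS sub by blast
qed

end


context ff
begin

lemma tangent_form:
  assumes ind: "indepN u (v::'a vec3)"
    and tan: "\<exists>P. P \<in> subline q r u v \<and> on_linf P"
    and aff: "\<exists>P\<in>subline q r u v. \<not> on_linf P"
  shows "\<exists>a b d1 d2. (d1, d2) \<noteq> (0, 0) \<and> (\<forall>P\<in>subline q r u v. \<not> on_linf P \<longrightarrow>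
      (\<exists>lm\<in>subf q r. phi q P = ptS q (a + lm * d1, b + lm * d2, 1)))"
proof -
  let ?K = "subf q r :: 'a set"
  obtain P0 where P0: "P0 \<in> subline q r u v" "on_linf P0" using tan by blast
  obtain s0 t0 where st0: "P0 = ptN (lin s0 u t0 v)" "s0 \<in> ?K" "t0 \<in> ?K" "(s0, t0) \<noteq> (0, 0)"
    using P0(1) unfolding subline_def lin_def by blast
  define D0 where "D0 = lin s0 u t0 v"
  obtain a' b' where ab': "P0 = ptN (a', b', 0)" using P0(2) unfolding on_linf_def by blast
  have "ptN D0 = ptN (a', b', 0)" using ab' st0(1) by (simp add: D0_def)
  then obtain c' where c': "c' \<noteq> 0" "(a', b', 0) = vsmul c' D0" using ptN_eq by blast
  hence "c' * snd (snd D0) = 0" by (simp add: vsmul_def)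
  hence D03: "snd (snd D0) = 0" using c'(1) by simp
  have D0nz: "D0 \<noteq> (0,0,0)" using indep_nz[OF ind st0(4)] by (simp add: D0_def)
  obtain U where U: "\<And>s t. s \<in> ?K \<Longrightarrow> t \<in> ?K \<Longrightarrow> \<exists>al be. al \<in> ?K \<and> be \<in> ?K \<and> lin s u t v = lin al U be D0"
  proof (cases "t0 = 0")
    case True
    hence s0: "s0 \<noteq> 0" using st0 by simp
    show ?thesis
    proof (rule that[of v])
      fix s t assume st: "s \<in> ?K" "t \<in> ?K"
      have "lin t v (s / s0) D0 = lin s u t v" using s0 True
        by (simp add: D0_def lin_def vsmul_def vadd_def field_simps)
      thus "\<exists>al be. al \<in> ?K \<and> be \<in> ?K \<and> lin s u t v = lin al v be D0"
        using st st0 by (intro exI[of _ t] exI[of _ "s / s0"]) (simp add: subf_divide)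
    qed
  next
    case False
    show ?thesis
    proof (rule that[of u])
      fix s t assume st: "s \<in> ?K" "t \<in> ?K"
      have "lin (s - t * s0 / t0) u (t / t0) D0 = lin s u t v" using False
        by (simp add: D0_def lin_def vsmul_def vadd_def field_simps)
      thus "\<exists>al be. al \<in> ?K \<and> be \<in> ?K \<and> lin s u t v = lin al u be D0"
        using st st0 by (intro exI[of _ "s - t * s0 / t0"] exI[of _ "t / t0"])
          (simp add: subf_divide subf_diff subf_mult)
    qed
  qed
  have third: "snd (snd (lin al U be D0)) = al * snd (snd U)" for al be
    using D03 by (simp add: lin_third)
  obtain P1 where P1: "P1 \<in> subline q r u v" "\<not> on_linf P1" using aff by blast
  obtain s1 t1 where st1: "P1 = ptN (lin s1 u t1 v)" "s1 \<in> ?K" "t1 \<in> ?K" "(s1, t1) \<noteq> (0, 0)"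
    using P1(1) unfolding subline_def lin_def by blast
  have "snd (snd (lin s1 u t1 v)) \<noteq> 0" using pt_aff[OF indep_nz[OF ind st1(4)]] P1(2) st1(1) by simp
  moreover obtain al be where "lin s1 u t1 v = lin al U be D0" using U st1 by blast
  ultimately have U3: "snd (snd U) \<noteq> 0" using third by auto
  obtain U1 U2 U3' where Ueq: "U = (U1, U2, U3')" by (cases U) auto
  obtain E1 E2 where Deq: "D0 = (E1, E2, 0)" using D03 by (cases D0) auto
  have E: "(E1 / U3', E2 / U3') \<noteq> (0, 0)" using D0nz Deq U3 Ueq by auto
  show ?thesis
  proof (intro exI conjI ballI impI)
    show "(E1 / U3', E2 / U3') \<noteq> (0, 0)" by (rule E)
    fix P assume P: "P \<in> subline q r u v" "\<not> on_linf P"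
    obtain s t where st: "P = ptN (lin s u t v)" "s \<in> ?K" "t \<in> ?K" "(s, t) \<noteq> (0, 0)"
      using P(1) unfolding subline_def lin_def by blast
    obtain al be where ab: "al \<in> ?K" "be \<in> ?K" "lin s u t v = lin al U be D0" using U st by blast
    have w3: "snd (snd (lin s u t v)) \<noteq> 0" using pt_aff[OF indep_nz[OF ind st(4)]] P(2) st(1) by simp
    hence al0: "al \<noteq> 0" using third ab(3) by auto
    have "phi q P = ptS q (vsmul (1 / snd (snd (lin s u t v))) (lin s u t v))"
      using phi_ptN[OF w3] st(1) by simp
    also have "vsmul (1 / snd (snd (lin s u t v))) (lin s u t v) =
        (U1 / U3' + be / al * (E1 / U3'), U2 / U3' + be / al * (E2 / U3'), 1)"
      unfolding ab(3) using al0 U3 Ueq Deq by (simp add: lin_def vsmul_def vadd_def field_simps)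
    finally show "\<exists>lm\<in>?K. phi q P = ptS q (U1 / U3' + lm * (E1 / U3'), U2 / U3' + lm * (E2 / U3'), 1)"
      using ab(1,2) by (intro bexI[of _ "be / al"]) (simp_all add: subf_divide)
  qed
qed

end


theorem corollary2p7:
  fixes q n k r :: nat and m :: "('a::{field,finite}) vec3 set set"
  assumes "\<exists>p e. prime p \<and> e > 0 \<and> q = p ^ e"
    and "n \<ge> 1" and "card (UNIV :: 'a set) = q ^ n"
    and "q \<ge> n" and "k dvd n" and "r dvd n"
    and "is_subline q k m" and "external_linf m"
    and "\<exists>m'. is_subline q r m' \<and> m \<subseteq> m' \<and> tangent_linf m'"
    and "\<forall>j. j dvd n \<and> (\<exists>m'. is_subline q j m' \<and> m \<subseteq> m' \<and> tangent_linf m') \<longrightarrow> r \<le> j"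
  shows "let M = phi q ` m in
      card M = q ^ k + 1 \<and> M \<subseteq> Sigma_points q \<and> (\<forall>P\<in>M. affine_Sigma_point q P)
    \<and> (\<forall>P1\<in>M. \<forall>P2\<in>M. \<forall>P3\<in>M. distinct [P1, P2, P3] \<longrightarrow> \<not> collinear3 q P1 P2 P3)
    \<and> (\<exists>S. subspace_dim q r S \<and> M \<subseteq> S \<and> D_elem q r (S \<inter> H_inf_points q))
    \<and> (\<forall>P1\<in>M. \<forall>P2\<in>M. \<forall>P3\<in>M. distinct [P1, P2, P3] \<longrightarrow>
         (\<exists>C. is_nrc q C \<and> C \<subseteq> M \<and> {P1, P2, P3} \<subseteq> C))"
proof -
  obtain p e where pe: "prime p" "e > 0" "q = p ^ e" using assms(1) by blast
  interpret ff q n p e "TYPE('a)"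
    by unfold_locales (use pe assms(2,3) in auto)
  obtain u v where uv: "indepN u v" "m = subline q k u v"
    using assms(7) unfolding is_subline_def by blast
  have ext: "\<not> on_linf P" if "P \<in> m" for P using assms(8) that unfolding external_linf_def by blast
  have mform: "\<exists>w. P = ptN w \<and> w \<noteq> (0,0,0) \<and> snd (snd w) \<noteq> 0" if P: "P \<in> m" for P
  proof -
    obtain s t where st: "P = ptN (lin s u t v)" "(s, t) \<noteq> (0, 0)"
      using P uv(2) unfolding subline_def lin_def by blast
    have nz: "lin s u t v \<noteq> (0,0,0)" using indep_nz[OF uv(1) st(2)] .
    thus ?thesis using pt_aff[OF nz] ext[OF P] st(1) by blast
  qed
  have phiform: "\<exists>x. phi q P = ptS q x \<and> snd (snd x) = 1 \<and> P = ptN x" if P: "P \<in> m" for P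
  proof -
    obtain w where w: "P = ptN w" "w \<noteq> (0,0,0)" "snd (snd w) \<noteq> 0" using mform[OF P] by blast
    have "phi q P = ptS q (vsmul (1 / snd (snd w)) w)" using phi_ptN[OF w(3)] w(1) by simp
    moreover have "snd (snd (vsmul (1 / snd (snd w)) w)) = 1" using w(3) by (simp add: vsmul_def)
    moreover have "P = ptN (vsmul (1 / snd (snd w)) w)" using w ptN_scale[of "1 / snd (snd w)" w] by simp
    ultimately show ?thesis by blast
  qed
  define M where "M = phi q ` m"
  have inj: "inj_on (phi q) m"
  proof (rule inj_onI)
    fix P P' assume P: "P \<in> m" "P' \<in> m" "phi q P = phi q P'"
    obtain x where x: "phi q P = ptS q x" "snd (snd x) = 1" "P = ptN x" using phiform[OF P(1)] by blast
    obtain x' where x': "phi q P' = ptS q x'" "snd (snd x') = 1" "P' = ptN x'" using phiform[OF P(2)] by blast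
    have "ptS q x = ptS q x'" using x x' P(3) by simp
    then obtain c where c: "x' = vsmul c x" using ptS_eq by blast
    hence "c = 1" using x(2) x'(2) by (simp add: vsmul_def)
    hence "x' = x" using c by simp
    thus "P = P'" using x x' by simp
  qed
  have card: "card M = q ^ k + 1"
    unfolding M_def using card_image[OF inj] card_subline[OF uv(1) assms(5)] uv(2) by simp
  have sig: "M \<subseteq> Sigma_points q"
  proof
    fix Q assume "Q \<in> M"
    then obtain P where P: "P \<in> m" "Q = phi q P" unfolding M_def by blast
    obtain x where x: "phi q P = ptS q x" "snd (snd x) = 1" using phiform[OF P(1)] by blast
    have "x \<noteq> (0,0,0)" using x(2) by auto
    moreover have "inV q x" using x(2) by (simp add: inV_def)
    ultimately show "Q \<in> Sigma_points q" unfolding Sigma_points_def using P(2) x(1) by blast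
  qed
  have affp: "\<forall>P\<in>M. affine_Sigma_point q P"
  proof
    fix Q assume "Q \<in> M"
    then obtain P where P: "P \<in> m" "Q = phi q P" unfolding M_def by blast
    obtain x where x: "phi q P = ptS q x" "snd (snd x) = 1" using phiform[OF P(1)] by blast
    show "affine_Sigma_point q Q" unfolding affine_Sigma_point_def using x P(2)
      by (intro exI[of _ x]) (simp add: inV_def)
  qed
  have trip: "\<exists>d es w1 w2 w3. 2 \<le> d \<and> d \<le> n \<and> length es = d + 1 \<and> (\<forall>e\<in>set es. inV q e) \<and> indepQ q es \<and>
    nrc q d es \<subseteq> M \<and> P1 = ptS q w1 \<and> P2 = ptS q w2 \<and> P3 = ptS q w3 \<and> {P1, P2, P3} \<subseteq> nrc q d es \<and>
    (\<forall>g1 g2 g3. g1 \<in> subf q 1 \<longrightarrow> g2 \<in> subf q 1 \<longrightarrow> g3 \<in> subf q 1 \<longrightarrow>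
       vadd (vsmul g1 w1) (vadd (vsmul g2 w2) (vsmul g3 w3)) = (0,0,0) \<longrightarrow> g1 = 0 \<and> g2 = 0 \<and> g3 = 0)"
    if P: "P1 \<in> M" "P2 \<in> M" "P3 \<in> M" "distinct [P1, P2, P3]" for P1 P2 P3
  proof -
    obtain Q1 where Q1: "Q1 \<in> m" "P1 = phi q Q1" using P(1) unfolding M_def by blast
    obtain Q2 where Q2: "Q2 \<in> m" "P2 = phi q Q2" using P(2) unfolding M_def by blast
    obtain Q3 where Q3: "Q3 \<in> m" "P3 = phi q Q3" using P(3) unfolding M_def by blast
    have dQ: "Q1 \<noteq> Q2" "Q1 \<noteq> Q3" "Q2 \<noteq> Q3" using P(4) Q1 Q2 Q3 by auto
    obtain A B where AB: "indepN A B" "Q1 = ptN A" "Q2 = ptN B" "Q3 = ptN (lin 1 A 1 B)"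
      "\<forall>s t. s \<in> subf q 1 \<longrightarrow> t \<in> subf q 1 \<longrightarrow> (s, t) \<noteq> (0, 0) \<longrightarrow> ptN (lin s A t B) \<in> m"
    proof -
      from three_pts[OF uv(1) Q1(1)[unfolded uv(2)] Q2(1)[unfolded uv(2)] Q3(1)[unfolded uv(2)] dQ]
      obtain A B where "indepN A B" "Q1 = ptN A" "Q2 = ptN B" "Q3 = ptN (lin 1 A 1 B)"
        "\<forall>s t. s \<in> subf q 1 \<longrightarrow> t \<in> subf q 1 \<longrightarrow> (s, t) \<noteq> (0, 0) \<longrightarrow> ptN (lin s A t B) \<in> subline q k u v"
        by blast
      thus ?thesis using that uv(2) by simp
    qed
    have extAB: "\<forall>s t. s \<in> subf q 1 \<longrightarrow> t \<in> subf q 1 \<longrightarrow> (s, t) \<noteq> (0, 0) \<longrightarrow> snd (snd (lin s A t B)) \<noteq> 0"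
    proof (intro allI impI)
      fix s t :: 'a assume st: "s \<in> subf q 1" "t \<in> subf q 1" "(s, t) \<noteq> (0, 0)"
      have "ptN (lin s A t B) \<in> m" using AB(5) st by blast
      thus "snd (snd (lin s A t B)) \<noteq> 0" using pt_aff[OF indep_nz[OF AB(1) st(3)]] ext by blast
    qed
    obtain d es w1 w2 w3 where W: "2 \<le> d" "d \<le> n" "length es = d + 1" "\<forall>e\<in>set es. inV q e" "indepQ q es"
      "nrc q d es = {phi q (ptN (lin s A t B)) | s t. s \<in> subf q 1 \<and> t \<in> subf q 1 \<and> (s, t) \<noteq> (0, 0)}"
      "phi q (ptN A) = ptS q w1" "phi q (ptN B) = ptS q w2" "phi q (ptN (lin 1 A 1 B)) = ptS q w3"
      "\<forall>g1 g2 g3. g1 \<in> subf q 1 \<longrightarrow> g2 \<in> subf q 1 \<longrightarrow> g3 \<in> subf q 1 \<longrightarrow>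
       vadd (vsmul g1 w1) (vadd (vsmul g2 w2) (vsmul g3 w3)) = (0,0,0) \<longrightarrow> g1 = 0 \<and> g2 = 0 \<and> g3 = 0"
      using nrc_wrap[OF AB(1) extAB] by (elim exE conjE) blast
    have CM: "nrc q d es \<subseteq> M"
    proof
      fix X assume "X \<in> nrc q d es"
      then obtain s t where "X = phi q (ptN (lin s A t B))" "s \<in> subf q 1" "t \<in> subf q 1" "(s, t) \<noteq> (0, 0)"
        using W(6) by blast
      thus "X \<in> M" unfolding M_def using AB(5) by blast
    qed
    have in1: "P1 \<in> nrc q d es"
    proof -
      have "P1 = phi q (ptN (lin 1 A 0 B))" using Q1 AB(2) by simp
      moreover have "(1::'a) \<in> subf q 1" "(0::'a) \<in> subf q 1" "((1::'a), (0::'a)) \<noteq> (0, 0)" by simp_all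
      ultimately show ?thesis unfolding W(6) by blast
    qed
    have in2: "P2 = phi q (ptN (lin 0 A 1 B))" using Q2 AB(3) by simp
    moreover have "(1::'a) \<in> subf q 1" "(0::'a) \<in> subf q 1" "((0::'a), (1::'a)) \<noteq> (0, 0)" by simp_all
    ultimately have in2': "P2 \<in> nrc q d es" unfolding W(6) by blast
    have "P3 = phi q (ptN (lin 1 A 1 B))" using Q3 AB(4) by simp
    moreover have "((1::'a), (1::'a)) \<noteq> (0, 0)" by simp
    ultimately have in3: "P3 \<in> nrc q d es" unfolding W(6) using \<open>(1::'a) \<in> subf q 1\<close> by blast
    have e1: "P1 = ptS q w1" using Q1 AB(2) W(7) by simp
    have e2: "P2 = ptS q w2" using Q2 AB(3) W(8) by simp
    have e3: "P3 = ptS q w3" using Q3 AB(4) W(9) by simp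
    have sub3: "{P1, P2, P3} \<subseteq> nrc q d es" using in1 in2' in3 by simp
    show ?thesis
      by (intro exI[of _ d] exI[of _ es] exI[of _ w1] exI[of _ w2] exI[of _ w3] conjI W(1-5) CM e1 e2 e3 sub3 W(10))
  qed
  have nocol: "\<forall>P1\<in>M. \<forall>P2\<in>M. \<forall>P3\<in>M. distinct [P1, P2, P3] \<longrightarrow> \<not> collinear3 q P1 P2 P3"
  proof (intro ballI impI)
    fix P1 P2 P3 assume P: "P1 \<in> M" "P2 \<in> M" "P3 \<in> M" "distinct [P1, P2, P3]"
    obtain d es w1 w2 w3 where W: "P1 = ptS q w1" "P2 = ptS q w2" "P3 = ptS q w3"
      "\<forall>g1 g2 g3. g1 \<in> subf q 1 \<longrightarrow> g2 \<in> subf q 1 \<longrightarrow> g3 \<in> subf q 1 \<longrightarrow>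
       vadd (vsmul g1 w1) (vadd (vsmul g2 w2) (vsmul g3 w3)) = (0,0,0) \<longrightarrow> g1 = 0 \<and> g2 = 0 \<and> g3 = 0"
      using trip[OF P] by (elim exE conjE) blast
    show "\<not> collinear3 q P1 P2 P3" unfolding W(1-3) by (rule not_col[OF W(4)])
  qed
  have nrcs: "\<forall>P1\<in>M. \<forall>P2\<in>M. \<forall>P3\<in>M. distinct [P1, P2, P3] \<longrightarrow>
         (\<exists>C. is_nrc q C \<and> C \<subseteq> M \<and> {P1, P2, P3} \<subseteq> C)"
  proof (intro ballI impI)
    fix P1 P2 P3 assume P: "P1 \<in> M" "P2 \<in> M" "P3 \<in> M" "distinct [P1, P2, P3]"
    obtain d es where W: "2 \<le> d" "d \<le> n" "length es = d + 1" "\<forall>e\<in>set es. inV q e" "indepQ q es"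
      "nrc q d es \<subseteq> M" "{P1, P2, P3} \<subseteq> nrc q d es"
      using trip[OF P] by (elim exE conjE) blast
    have "is_nrc q (nrc q d es)" unfolding is_nrc_def using W(1-5) assms(4)
      by (intro exI[of _ d] exI[of _ es]) auto
    thus "\<exists>C. is_nrc q C \<and> C \<subseteq> M \<and> {P1, P2, P3} \<subseteq> C" using W(6,7) by blast
  qed
  have subsp: "\<exists>S. subspace_dim q r S \<and> M \<subseteq> S \<and> D_elem q r (S \<inter> H_inf_points q)"
  proof -
    obtain m' where m': "is_subline q r m'" "m \<subseteq> m'" "tangent_linf m'" using assms(9) by blast
    obtain u' v' where uv': "indepN u' v'" "m' = subline q r u' v'" using m'(1) unfolding is_subline_def by blast
    have tan: "\<exists>P. P \<in> subline q r u' v' \<and> on_linf P" using m'(3) uv'(2) unfolding tangent_linf_def by blast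
    have "m \<noteq> {}" using card_subline[OF uv(1) assms(5)] uv(2) by auto
    then obtain P0 where "P0 \<in> m" by blast
    hence aff: "\<exists>P\<in>subline q r u' v'. \<not> on_linf P" using m'(2) uv'(2) ext by blast
    obtain a b d1 d2 where T: "(d1, d2) \<noteq> (0, 0)" "\<forall>P\<in>subline q r u' v'. \<not> on_linf P \<longrightarrow>
      (\<exists>lm\<in>subf q r. phi q P = ptS q (a + lm * d1, b + lm * d2, 1))"
      using tangent_form[OF uv'(1) tan aff] by blast
    obtain S where S: "subspace_dim q r S" "{ptS q (a + lm * d1, b + lm * d2, 1) | lm. lm \<in> subf q r} \<subseteq> S"
      "D_elem q r (S \<inter> H_inf_points q)"
      using subspace_part[OF assms(6) T(1)] by blast
    have "M \<subseteq> S"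
    proof
      fix X assume "X \<in> M"
      then obtain P where P: "P \<in> m" "X = phi q P" unfolding M_def by blast
      have "P \<in> subline q r u' v'" using P(1) m'(2) uv'(2) by blast
      then obtain lm where "lm \<in> subf q r" "phi q P = ptS q (a + lm * d1, b + lm * d2, 1)"
        using T(2) ext[OF P(1)] by blast
      thus "X \<in> S" using S(2) P(2) by blast
    qed
    thus ?thesis using S by blast
  qed
  show ?thesis unfolding Let_def M_def[symmetric]
    using card sig affp nocol subsp nrcs by blast
qed


end
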